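(* Let $\mathbf Y\in\mathbb{R}^n$, $\mathbf X\in\mathbb{R}^n$, $\mathbf Z\in\mathbb{R}^{n\times p}$ with $p=p_n$. Let $\mathbf D^Y,\mathbf D^X\in\mathbb{R}^{n\times n}$ be known diagonal matrices and $\Lambda^Y,\Lambda^X\in\mathbb{R}^{p\times p}$ diagonal matrices such that every column of $\mathbf D^Y\mathbf Z\Lambda^Y$ and of $\mathbf D^X\mathbf Z\Lambda^X$ has squared Euclidean norm $n$. Suppose the $Y$-model $$\mathbf D^Y\mathbf Y=\mathbf D^Y\mathbf Z\Lambda^Y\beta^Y+\boldsymbol\varepsilon^Y$$ holds for some $\beta^Y\in\mathbb{R}^p$, where, conditional on $\mathbf Z$ (and the diagonal matrices), the components of $\boldsymbol\varepsilon^Y$ are independent $\mathcal N(0,\sigma_Y^2)$. Let $\lambda=A\sqrt{2\log(p)/n}$ for a fixed $A>1$, and define $$\hat\beta^Y\in\arg\min_{b\in\mathbb{R}^p}\{\|\mathbf D^Y(\mathbf Y-\mathbf Z\Lambda^Yb)\|_2/\sqrt n+\lambda\|b\|_1\},\qquad\tilde{\mathbf Y}=\mathbf Y-\mathbf Z\Lambda^Y\hat\beta^Y,$$ $$(\tilde\beta^Y,\tilde\eta^Y)\in\arg\min_{(b,u)\in\mathbb{R}^p\times\mathbb{R}^p}\{\|\mathbf D^Y(\tilde{\mathbf Y}-\mathbf Z\Lambda^Yb)-\mathbf D^X\mathbf Z\Lambda^Xu\|_2/\sqrt n+\lambda(\|b\|_1+\|u\|_1)\}.$$ Let $s_Y=|\{j:\beta^Y_j\neq0\}|$,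 and assume there is a constant $C'>0$ with $\mathbb{P}(\|\hat\beta^Y-\beta^Y\|_1>C's_Y\sqrt{\log(p)/n})\to0$, and that $s_Y\log(p)/n\to0$. Then there exists a constant $C>0$ such that $$\mathbb{P}\big(\|\tilde\beta^Y\|_1+\|\tilde\eta^Y\|_1\le C\|\beta^Y-\hat\beta^Y\|_1\big)\to1\quad\text{as }n\to\infty.$$
   Context: This is the heteroscedastic linear model setting: equivalently $Y_i=(Z_i^T\Lambda^Y\beta^Y)+\zeta_i$ with $\mathrm{Var}(\zeta_i\mid\mathbf Z)=\sigma_Y^2/(D^Y_{ii})^2$. All limits are as $n\to\infty$. *)

theory Defs
  imports "HOL-Probability.Probability"
begin

text \<open>Vectors in R^k are represented as functions nat => real, only the
 coordinates below k matter; matrices as nat => nat => real; diagonal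
 matrices by their diagonal nat => real.\<close>

definition l1norm :: "nat \<Rightarrow> (nat \<Rightarrow> real) \<Rightarrow> real" where
  "l1norm k v = (\<Sum>j<k. \<bar>v j\<bar>)"

definition l2norm :: "nat \<Rightarrow> (nat \<Rightarrow> real) \<Rightarrow> real" where
  "l2norm k v = sqrt (\<Sum>i<k. (v i)\<^sup>2)"

definition mat_diag_vec :: "nat \<Rightarrow> (nat \<Rightarrow> nat \<Rightarrow> real) \<Rightarrow> (nat \<Rightarrow> real) \<Rightarrow> (nat \<Rightarrow> real) \<Rightarrow> nat \<Rightarrow> real" where
  "mat_diag_vec p Z L b i = (\<Sum>j<p. Z i j * L j * b j)"

definition obj1 :: "nat \<Rightarrow> nat \<Rightarrow> real \<Rightarrow> (nat \<Rightarrow> real) \<Rightarrow> (nat \<Rightarrow> nat \<Rightarrow> real)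
   \<Rightarrow> (nat \<Rightarrow> real) \<Rightarrow> (nat \<Rightarrow> real) \<Rightarrow> (nat \<Rightarrow> real) \<Rightarrow> real" where
  "obj1 n p lam DY Z LY Y b =
     l2norm n (\<lambda>i. DY i * (Y i - mat_diag_vec p Z LY b i)) / sqrt n + lam * l1norm p b"

definition obj2 :: "nat \<Rightarrow> nat \<Rightarrow> real \<Rightarrow> (nat \<Rightarrow> real) \<Rightarrow> (nat \<Rightarrow> real) \<Rightarrow> (nat \<Rightarrow> nat \<Rightarrow> real)
   \<Rightarrow> (nat \<Rightarrow> real) \<Rightarrow> (nat \<Rightarrow> real) \<Rightarrow> (nat \<Rightarrow> real) \<Rightarrow> (nat \<Rightarrow> real) \<Rightarrow> (nat \<Rightarrow> real) \<Rightarrow> real" where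
  "obj2 n p lam DY DX Z LY LX Yt b u =
     l2norm n (\<lambda>i. DY i * (Yt i - mat_diag_vec p Z LY b i) - DX i * mat_diag_vec p Z LX u i) / sqrt n
     + lam * (l1norm p b + l1norm p u)"

text \<open>Coordinates of the conditioning information (Z, D^Y, D^X, Lambda^Y, Lambda^X).\<close>
datatype cidx = CZ nat nat | CDY nat | CDX nat | CLY nat | CLX nat | CE nat

definition cov_set :: "nat \<Rightarrow> nat \<Rightarrow> cidx set" where
  "cov_set n p = {CZ i j | i j. i < n \<and> j < p} \<union> CDY ` {..<n} \<union> CDX ` {..<n}
                 \<union> CLY ` {..<p} \<union> CLX ` {..<p}"

fun cov_val :: "(nat \<Rightarrow> nat \<Rightarrow> real) \<Rightarrow> (nat \<Rightarrow> real) \<Rightarrow> (nat \<Rightarrow> real) \<Rightarrow> (nat \<Rightarrow> real)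
   \<Rightarrow> (nat \<Rightarrow> real) \<Rightarrow> cidx \<Rightarrow> real" where
  "cov_val Z DY DX LY LX (CZ i j) = Z i j"
| "cov_val Z DY DX LY LX (CDY i) = DY i"
| "cov_val Z DY DX LY LX (CDX i) = DX i"
| "cov_val Z DY DX LY LX (CLY j) = LY j"
| "cov_val Z DY DX LY LX (CLX j) = LX j"
| "cov_val Z DY DX LY LX (CE i) = 0"

text \<open>The error vector, indexed by CE i (i < n), so that it lives in the same
 kind of product space as the covariates (needed for indep_var).\<close>
fun err_val :: "(nat \<Rightarrow> real) \<Rightarrow> cidx \<Rightarrow> real" where
  "err_val e (CE i) = e i"
| "err_val e _ = 0"

end

theory Submission
  imports Defs
begin


lemma exp_normal_shift:
  "exp (t*x) * std_normal_density x = exp (t^2/2) * normal_density t 1 x"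
proof -
  have "exp (t*x) * exp (- x\<^sup>2 / 2) = exp (t^2/2) * exp (-(x - t)\<^sup>2 / 2)"
    unfolding mult_exp_exp by (rule arg_cong[where f=exp]) (simp add: field_simps power2_eq_square)
  then show ?thesis unfolding normal_density_def by simp
qed

lemma nn_mgf_std_normal:
  "(\<integral>\<^sup>+x. ennreal (exp (t*x) * std_normal_density x) \<partial>lborel) = ennreal (exp (t^2/2))"
proof -
  have "(\<integral>\<^sup>+x. ennreal (exp (t*x) * std_normal_density x) \<partial>lborel)
      = (\<integral>\<^sup>+x. ennreal (exp (t^2/2)) * ennreal (normal_density t 1 x) \<partial>lborel)"
    by (simp add: exp_normal_shift ennreal_mult')
  also have "\<dots> = ennreal (exp (t^2/2)) * (\<integral>\<^sup>+x. ennreal (normal_density t 1 x) \<partial>lborel)"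
    by (rule nn_integral_cmult) simp
  also have "(\<integral>\<^sup>+x. ennreal (normal_density t 1 x) \<partial>lborel) = 1"
    by (subst nn_integral_eq_integral) (auto simp: normal_density_nonneg)
  finally show ?thesis by simp
qed

lemma std_normal_tail:
  assumes t: "t \<ge> 0"
  shows "emeasure (density lborel std_normal_density) {x. \<bar>x\<bar> > t} \<le> ennreal (2 * exp (-(t^2)/2))"
proof -
  have "emeasure (density lborel std_normal_density) {x. \<bar>x\<bar> > t}
     = (\<integral>\<^sup>+x. ennreal (std_normal_density x) * indicator {x. \<bar>x\<bar> > t} x \<partial>lborel)"
    by (subst emeasure_density) auto
  also have "\<dots> \<le> (\<integral>\<^sup>+x. ennreal (exp (-(t^2)) * (exp (t*x) * std_normal_density x))
           + ennreal (exp (-(t^2)) * (exp ((-t)*x) * std_normal_density x)) \<partial>lborel)"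
  proof (rule nn_integral_mono)
    fix x :: real
    show "ennreal (std_normal_density x) * indicator {x. \<bar>x\<bar> > t} x
      \<le> ennreal (exp (-(t^2)) * (exp (t*x) * std_normal_density x))
           + ennreal (exp (-(t^2)) * (exp ((-t)*x) * std_normal_density x))"
    proof (cases "\<bar>x\<bar> > t")
      case True
      have "1 \<le> exp (-(t^2)) * exp (t*x) + exp (-(t^2)) * exp ((-t)*x)"
      proof (cases "x > t")
        case True
        then have "t*t \<le> t*x" using t by (intro mult_left_mono) auto
        then have "1 \<le> exp (-(t^2)) * exp (t*x)"
          unfolding mult_exp_exp by (simp add: power2_eq_square)
        moreover have "0 \<le> exp (-(t^2)) * exp ((-t)*x)" "0 \<le> exp (-(t^2)) * exp (t*x)" by simp_all
        ultimately show ?thesis by linarith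
      next
        case False
        with \<open>\<bar>x\<bar> > t\<close> have "x < -t" by auto
        then have "t*t \<le> t*(-x)" using t by (intro mult_left_mono) auto
        then have "t*t \<le> (-t)*x" by simp
        then have "1 \<le> exp (-(t^2)) * exp ((-t)*x)"
          unfolding mult_exp_exp by (simp add: power2_eq_square)
        moreover have "0 \<le> exp (-(t^2)) * exp ((-t)*x)" "0 \<le> exp (-(t^2)) * exp (t*x)" by simp_all
        ultimately show ?thesis by linarith
      qed
      then have "1 * std_normal_density x \<le> (exp (-(t^2)) * exp (t*x) + exp (-(t^2)) * exp ((-t)*x)) * std_normal_density x"
        using normal_density_nonneg[of 0 1 x] by (rule mult_right_mono)
      then have "std_normal_density x \<le> exp (-(t^2)) * (exp (t*x) * std_normal_density x)
           + exp (-(t^2)) * (exp ((-t)*x) * std_normal_density x)"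
        by (simp add: algebra_simps)
      then show ?thesis using True
        by (simp add: ennreal_plus[symmetric] del: ennreal_plus)
    qed simp
  qed
  also have "\<dots> = (\<integral>\<^sup>+x. ennreal (exp (-(t^2)) * (exp (t*x) * std_normal_density x)) \<partial>lborel)
           + (\<integral>\<^sup>+x. ennreal (exp (-(t^2)) * (exp ((-t)*x) * std_normal_density x)) \<partial>lborel)"
    by (rule nn_integral_add) auto
  also have "(\<integral>\<^sup>+x. ennreal (exp (-(t^2)) * (exp (t*x) * std_normal_density x)) \<partial>lborel)
       = ennreal (exp (-(t^2))) * ennreal (exp (t^2/2))"
    by (simp add: ennreal_mult' nn_integral_cmult nn_mgf_std_normal[symmetric])
  also have "(\<integral>\<^sup>+x. ennreal (exp (-(t^2)) * (exp ((-t)*x) * std_normal_density x)) \<partial>lborel)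
       = ennreal (exp (-(t^2))) * ennreal (exp (t^2/2))"
    using nn_mgf_std_normal[of "-t"] by (simp add: ennreal_mult' nn_integral_cmult)
  also have "ennreal (exp (-(t^2))) * ennreal (exp (t^2/2)) + ennreal (exp (-(t^2))) * ennreal (exp (t^2/2))
       = ennreal (2 * exp (-(t^2)/2))"
    by (simp add: ennreal_mult'[symmetric] ennreal_plus[symmetric] mult_exp_exp del: ennreal_plus)
  finally show ?thesis .
qed

lemma std_normal_center_lt1:
  "measure (density lborel std_normal_density) {x. \<bar>x\<bar> \<le> M} < 1"
proof -
  let ?N = "density lborel std_normal_density"
  interpret N: prob_space ?N by (rule prob_space_normal_density) simp
  have sets: "{x. \<bar>x\<bar> \<le> M} \<in> sets ?N" "{x::real. \<bar>x\<bar> > M} \<in> sets ?N" by auto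
  have "emeasure ?N {x. \<bar>x\<bar> > M} = (\<integral>\<^sup>+x. ennreal (std_normal_density x) * indicator {x. \<bar>x\<bar> > M} x \<partial>lborel)"
    by (subst emeasure_density) auto
  also have "\<dots> \<ge> (\<integral>\<^sup>+x. ennreal (std_normal_density (\<bar>M\<bar>+1)) * indicator {\<bar>M\<bar><..\<bar>M\<bar>+1} x \<partial>lborel)"
  proof (rule nn_integral_mono)
    fix x :: real
    show "ennreal (std_normal_density (\<bar>M\<bar>+1)) * indicator {\<bar>M\<bar><..\<bar>M\<bar>+1} x
       \<le> ennreal (std_normal_density x) * indicator {x. \<bar>x\<bar> > M} x"
    proof (cases "x \<in> {\<bar>M\<bar><..\<bar>M\<bar>+1}")
      case True
      then have "x^2 \<le> (\<bar>M\<bar>+1)^2" by (intro power_mono) auto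
      then have "std_normal_density (\<bar>M\<bar>+1) \<le> std_normal_density x"
        unfolding std_normal_density_def by (intro mult_left_mono) auto
      then show ?thesis using True by (auto simp: indicator_def)
    qed simp
  qed
  also have "(\<integral>\<^sup>+x. ennreal (std_normal_density (\<bar>M\<bar>+1)) * indicator {\<bar>M\<bar><..\<bar>M\<bar>+1} x \<partial>lborel)
     = ennreal (std_normal_density (\<bar>M\<bar>+1))" by (subst nn_integral_cmult_indicator) auto
  finally have pos: "0 < measure ?N {x. \<bar>x\<bar> > M}"
    using normal_density_pos[of 1 0 "\<bar>M\<bar>+1"]
    by (simp add: N.emeasure_eq_measure)
  have "measure ?N {x. \<bar>x\<bar> \<le> M} = 1 - measure ?N {x. \<bar>x\<bar> > M}"
    using N.prob_compl[OF sets(2)] by (simp add: not_less[symmetric] set_diff_eq)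
  with pos show ?thesis by simp
qed



lemma fixed_coef_std_normal:
  assumes P: "prob_space M"
    and ind: "prob_space.indep_vars M (\<lambda>_. borel) e {..<n}"
    and nd: "\<And>i. i < n \<Longrightarrow> distributed M lborel (e i) (normal_density 0 \<sigma>)"
    and s: "\<sigma> > 0"
    and a: "(\<Sum>i<n. (a i)\<^sup>2) = real n" and n: "n > 0"
  shows "distributed M lborel (\<lambda>\<omega>. (\<Sum>i<n. a i * e i \<omega>) / (\<sigma> * sqrt (real n))) std_normal_density"
proof -
  interpret prob_space M by fact
  define I where "I = {i. i < n \<and> a i \<noteq> 0}"
  have fin: "finite I" unfolding I_def by auto
  have sumI: "(\<Sum>i<n. a i * e i \<omega>) = (\<Sum>i\<in>I. a i * e i \<omega>)" for \<omega>
    by (rule sum.mono_neutral_right) (auto simp: I_def)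
  have sq: "(\<Sum>i<n. (a i)\<^sup>2) = (\<Sum>i\<in>I. (a i)\<^sup>2)"
    by (rule sum.mono_neutral_right) (auto simp: I_def)
  have ne: "I \<noteq> {}"
  proof
    assume "I = {}"
    then have "(\<Sum>i<n. (a i)\<^sup>2) = 0" using sq by simp
    with a n show False by simp
  qed
  have indI: "indep_vars (\<lambda>_. borel) (\<lambda>i \<omega>. a i * e i \<omega>) I"
    by (rule indep_vars_compose2[where X=e and Y="\<lambda>i x. a i * x", OF indep_vars_subset[OF ind]])
       (auto simp: I_def)
  have di: "distributed M lborel (\<lambda>\<omega>. a i * e i \<omega>) (normal_density 0 (\<bar>a i\<bar> * \<sigma>))" if "i \<in> I" for i
    using normal_density_affine[OF nd[of i] s, of "a i" 0] that by (simp add: I_def)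
  have "distributed M lborel (\<lambda>\<omega>. \<Sum>i\<in>I. a i * e i \<omega>)
      (normal_density (\<Sum>i\<in>I. 0) (sqrt (\<Sum>i\<in>I. (\<bar>a i\<bar> * \<sigma>)\<^sup>2)))"
    by (rule sum_indep_normal[OF fin ne indI]) (use di s in \<open>auto simp: I_def\<close>)
  moreover have "sqrt (\<Sum>i\<in>I. (\<bar>a i\<bar> * \<sigma>)\<^sup>2) = \<sigma> * sqrt (real n)"
  proof -
    have "(\<Sum>i\<in>I. (\<bar>a i\<bar> * \<sigma>)\<^sup>2) = \<sigma>\<^sup>2 * real n"
      using a sq by (simp add: power_mult_distrib sum_distrib_left[symmetric] mult.commute)
    then show ?thesis using s by (simp add: real_sqrt_mult)
  qed
  ultimately have "distributed M lborel (\<lambda>\<omega>. \<Sum>i<n. a i * e i \<omega>) (normal_density 0 (\<sigma> * sqrt (real n)))"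
    by (simp add: sumI)
  then show ?thesis
    using normal_standard_normal_convert[of "\<sigma> * sqrt (real n)"] s n by simp
qed



lemma mix_std_normal:
  fixes c :: "'a \<Rightarrow> cidx \<Rightarrow> real" and ev :: "'a \<Rightarrow> cidx \<Rightarrow> real"
    and w :: "(cidx \<Rightarrow> real) \<Rightarrow> nat \<Rightarrow> real"
  assumes P: "prob_space M"
    and iv: "prob_space.indep_var M (Pi\<^sub>M I (\<lambda>_. borel)) c (Pi\<^sub>M (CE ` {..<n}) (\<lambda>_. borel)) ev"
    and eveq: "\<And>\<omega> i. \<omega> \<in> space M \<Longrightarrow> i < n \<Longrightarrow> ev \<omega> (CE i) = e i \<omega>"
    and ind: "prob_space.indep_vars M (\<lambda>_. borel) e {..<n}"
    and nd: "\<And>i. i < n \<Longrightarrow> distributed M lborel (e i) (normal_density 0 \<sigma>)"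
    and s: "\<sigma> > 0" and n: "n > 0"
    and wm: "\<And>i. (\<lambda>x. w x i) \<in> borel_measurable (Pi\<^sub>M I (\<lambda>_. borel))"
    and wn: "\<And>\<omega>. \<omega> \<in> space M \<Longrightarrow> (\<Sum>i<n. (w (c \<omega>) i)\<^sup>2) = real n"
    and B: "B \<in> sets borel"
  shows "measure M {\<omega> \<in> space M. (\<Sum>i<n. w (c \<omega>) i * e i \<omega>) / (\<sigma> * sqrt (real n)) \<in> B}
       = measure (density lborel std_normal_density) B"
    and "{\<omega> \<in> space M. (\<Sum>i<n. w (c \<omega>) i * e i \<omega>) / (\<sigma> * sqrt (real n)) \<in> B} \<in> sets M"
proof -
  interpret prob_space M by fact
  let ?S = "Pi\<^sub>M I (\<lambda>_. borel) :: (cidx \<Rightarrow> real) measure"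
  let ?T = "Pi\<^sub>M (CE ` {..<n}) (\<lambda>_. borel) :: (cidx \<Rightarrow> real) measure"
  let ?N = "density lborel std_normal_density"
  have rvc: "c \<in> measurable M ?S" using indep_var_rv1[OF iv] .
  have rve: "ev \<in> measurable M ?T" using indep_var_rv2[OF iv] .
  define w' where "w' x i = (if (\<Sum>i<n. (w x i)\<^sup>2) = real n then w x i else (if i = 0 then sqrt (real n) else 0))" for x i
  have w'n: "(\<Sum>i<n. (w' x i)\<^sup>2) = real n" for x
  proof (cases "(\<Sum>i<n. (w x i)\<^sup>2) = real n")
    case False
    have "(\<Sum>i<n. (w' x i)\<^sup>2) = (\<Sum>i<n. (if i = 0 then real n else 0))"
      using False by (intro sum.cong) (auto simp: w'_def)
    also have "\<dots> = real n" using n by (simp add: sum.delta)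
    finally show ?thesis .
  qed (simp add: w'_def)
  have w'm: "(\<lambda>x. w' x i) \<in> borel_measurable ?S" for i
    unfolding w'_def using wm by measurable
  define f where "f z = (\<Sum>i<n. w' (fst z) i * snd z (CE i)) / (\<sigma> * sqrt (real n))" for z :: "(cidx \<Rightarrow> real) \<times> (cidx \<Rightarrow> real)"
  have fm: "f \<in> borel_measurable (?S \<Otimes>\<^sub>M ?T)"
    unfolding f_def
  proof (intro borel_measurable_divide borel_measurable_sum borel_measurable_times borel_measurable_const)
    fix i assume "i \<in> {..<n}"
    show "(\<lambda>z. w' (fst z) i) \<in> borel_measurable (?S \<Otimes>\<^sub>M ?T)"
      using w'm[of i] by measurable
    show "(\<lambda>z. snd z (CE i)) \<in> borel_measurable (?S \<Otimes>\<^sub>M ?T)"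
      using \<open>i \<in> {..<n}\<close>
      by (intro measurable_compose[OF measurable_snd] measurable_component_singleton) auto
  qed
  define A where "A = f -` B \<inter> space (?S \<Otimes>\<^sub>M ?T)"
  have A: "A \<in> sets (?S \<Otimes>\<^sub>M ?T)" unfolding A_def using fm B by (rule measurable_sets)
  have ev_eq: "{\<omega> \<in> space M. (\<Sum>i<n. w (c \<omega>) i * e i \<omega>) / (\<sigma> * sqrt (real n)) \<in> B}
      = (\<lambda>\<omega>. (c \<omega>, ev \<omega>)) -` A \<inter> space M"
  proof -
    have "f (c \<omega>, ev \<omega>) = (\<Sum>i<n. w (c \<omega>) i * e i \<omega>) / (\<sigma> * sqrt (real n))" if "\<omega> \<in> space M" for \<omega>
      unfolding f_def using wn[OF that] eveq[OF that] by (auto simp: w'_def intro!: sum.cong)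
    moreover have "(c \<omega>, ev \<omega>) \<in> space (?S \<Otimes>\<^sub>M ?T)" if "\<omega> \<in> space M" for \<omega>
      using measurable_space[OF rvc that] measurable_space[OF rve that] by (simp add: space_pair_measure)
    ultimately show ?thesis unfolding A_def by auto
  qed
  show "{\<omega> \<in> space M. (\<Sum>i<n. w (c \<omega>) i * e i \<omega>) / (\<sigma> * sqrt (real n)) \<in> B} \<in> sets M"
    unfolding ev_eq by (rule measurable_sets[OF measurable_Pair[OF rvc rve] A])
  have "emeasure M ((\<lambda>\<omega>. (c \<omega>, ev \<omega>)) -` A \<inter> space M) = emeasure (distr M (?S \<Otimes>\<^sub>M ?T) (\<lambda>\<omega>. (c \<omega>, ev \<omega>))) A"
    by (rule emeasure_distr[symmetric]) (use rvc rve A in auto)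
  also have "distr M (?S \<Otimes>\<^sub>M ?T) (\<lambda>\<omega>. (c \<omega>, ev \<omega>)) = distr M ?S c \<Otimes>\<^sub>M distr M ?T ev"
    using iv unfolding indep_var_distribution_eq by simp
  also have "emeasure (distr M ?S c \<Otimes>\<^sub>M distr M ?T ev) A
      = (\<integral>\<^sup>+x. emeasure (distr M ?T ev) (Pair x -` A) \<partial>distr M ?S c)"
  proof -
    interpret T: prob_space "distr M ?T ev" by (rule prob_space_distr[OF rve])
    show ?thesis by (rule T.emeasure_pair_measure_alt) (use A in simp)
  qed
  also have "\<dots> = (\<integral>\<^sup>+x. emeasure ?N B \<partial>distr M ?S c)"
  proof (rule nn_integral_cong)
    fix x assume x: "x \<in> space (distr M ?S c)"
    have X: "distributed M lborel (\<lambda>\<omega>. (\<Sum>i<n. w' x i * e i \<omega>) / (\<sigma> * sqrt (real n))) std_normal_density"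
      by (rule fixed_coef_std_normal[OF P ind nd s w'n n])
    have PA: "Pair x -` A = (\<lambda>y. f (x, y)) -` B \<inter> space ?T"
      using x unfolding A_def by (auto simp: space_pair_measure)
    have Sx: "(\<lambda>y. f (x, y)) -` B \<inter> space ?T \<in> sets ?T"
      by (rule measurable_sets[OF _ B], rule measurable_Pair2[OF fm]) (use x in simp)
    have "emeasure (distr M ?T ev) (Pair x -` A) = emeasure M (ev -` ((\<lambda>y. f (x, y)) -` B \<inter> space ?T) \<inter> space M)"
      unfolding PA by (rule emeasure_distr[OF rve Sx])
    also have "ev -` ((\<lambda>y. f (x, y)) -` B \<inter> space ?T) \<inter> space M
        = (\<lambda>\<omega>. (\<Sum>i<n. w' x i * e i \<omega>) / (\<sigma> * sqrt (real n))) -` B \<inter> space M"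
      using measurable_space[OF rve] eveq unfolding f_def by (auto intro!: sum.cong) 
    also have "emeasure M \<dots> = emeasure ?N B"
      using distributed_emeasure[OF X, of B] B by (simp add: emeasure_density)
    finally show "emeasure (distr M ?T ev) (Pair x -` A) = emeasure ?N B" .
  qed
  also have "\<dots> = emeasure ?N B"
  proof -
    interpret Cd: prob_space "distr M ?S c" by (rule prob_space_distr[OF rvc])
    show ?thesis using Cd.emeasure_space_1 by simp
  qed
  finally have "emeasure M {\<omega> \<in> space M. (\<Sum>i<n. w (c \<omega>) i * e i \<omega>) / (\<sigma> * sqrt (real n)) \<in> B} = emeasure ?N B"
    using ev_eq by simp
  then show "measure M {\<omega> \<in> space M. (\<Sum>i<n. w (c \<omega>) i * e i \<omega>) / (\<sigma> * sqrt (real n)) \<in> B}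
       = measure (density lborel std_normal_density) B" by (simp add: measure_def)
qed



lemma normal_moments:
  assumes P: "prob_space M" and nd: "distributed M lborel X (normal_density 0 \<sigma>)" and s: "\<sigma> > 0"
  shows "integrable M (\<lambda>\<omega>. (X \<omega>)^k)"
    and "(\<integral>\<omega>. (X \<omega>)^2 \<partial>M) = \<sigma>^2"
    and "(\<integral>\<omega>. (X \<omega>)^4 \<partial>M) = 3 * \<sigma>^4"
proof -
  show "integrable M (\<lambda>\<omega>. (X \<omega>)^k)"
    using distributed_integrable[OF nd, of "\<lambda>x. x^k"] integrable_normal_moment[where \<mu>=0 and \<sigma>=\<sigma> and k=k] s by auto
  have "(\<integral>\<omega>. (X \<omega>)^(2*1) \<partial>M) = fact (2 * 1) / ((2 / \<sigma>\<^sup>2)^1 * fact 1)"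
    using distributed_integral[OF nd, of "\<lambda>x. x^(2*1)"] integral_normal_moment_even[of \<sigma> 0 1] s by simp
  then show "(\<integral>\<omega>. (X \<omega>)^2 \<partial>M) = \<sigma>^2" using s by (simp add: field_simps power2_eq_square)
  have "(\<integral>\<omega>. (X \<omega>)^(2*2) \<partial>M) = fact (2 * 2) / ((2 / \<sigma>\<^sup>2)^2 * fact 2)"
    using distributed_integral[OF nd, of "\<lambda>x. x^(2*2)"] integral_normal_moment_even[of \<sigma> 0 2] s by simp
  then show "(\<integral>\<omega>. (X \<omega>)^4 \<partial>M) = 3 * \<sigma>^4" using s
    by (simp add: field_simps fact_numeral power2_eq_square power4_eq_xxxx)
qed

lemma chi_square_chebyshev:
  assumes P: "prob_space M"
    and ind: "prob_space.indep_vars M (\<lambda>_. borel) e {..<n}"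
    and nd: "\<And>i. i < n \<Longrightarrow> distributed M lborel (e i) (normal_density 0 \<sigma>)"
    and s: "\<sigma> > 0" and a: "a > 0"
  shows "measure M {\<omega> \<in> space M. \<bar>(\<Sum>i<n. (e i \<omega>)\<^sup>2) - real n * \<sigma>\<^sup>2\<bar> \<ge> a}
           \<le> 2 * real n * \<sigma>^4 / a\<^sup>2"
proof -
  interpret prob_space M by fact
  define Y where "Y i \<omega> = (e i \<omega>)\<^sup>2 - \<sigma>\<^sup>2" for i \<omega>
  have em[measurable]: "e i \<in> borel_measurable M" if "i < n" for i
    using distributed_measurable[OF nd[OF that]] by simp
  have intk: "integrable M (\<lambda>\<omega>. (e i \<omega>)^k)" if "i < n" for i k
    by (rule normal_moments(1)[OF P nd[OF that] s])
  have intY: "integrable M (Y i)" if "i < n" for i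
    unfolding Y_def using intk[OF that, of 2] by simp
  have EY: "expectation (Y i) = 0" if "i < n" for i
    unfolding Y_def using intk[OF that, of 2] normal_moments(2)[OF P nd[OF that] s] by (simp add: prob_space)
  have intYY: "integrable M (\<lambda>\<omega>. Y i \<omega> * Y j \<omega>)" if "i < n" "j < n" for i j
  proof -
    have "(\<lambda>\<omega>. Y i \<omega> * Y j \<omega>) = (\<lambda>\<omega>. ((e i \<omega>)\<^sup>2 * (e j \<omega>)\<^sup>2) - \<sigma>\<^sup>2 * (e i \<omega>)\<^sup>2 - \<sigma>\<^sup>2 * (e j \<omega>)\<^sup>2 + \<sigma>^4)"
      unfolding Y_def by (auto simp: fun_eq_iff algebra_simps power2_eq_square power4_eq_xxxx)
    moreover have "integrable M (\<lambda>\<omega>. (e i \<omega>)\<^sup>2 * (e j \<omega>)\<^sup>2)"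
    proof -
      have "integrable M (\<lambda>\<omega>. ((e i \<omega>)^4 + (e j \<omega>)^4))"
        using intk[OF that(1), of 4] intk[OF that(2), of 4] by simp
      then show ?thesis
      proof (rule Bochner_Integration.integrable_bound)
        show "(\<lambda>\<omega>. (e i \<omega>)\<^sup>2 * (e j \<omega>)\<^sup>2) \<in> borel_measurable M" using that by measurable
        show "AE \<omega> in M. norm ((e i \<omega>)\<^sup>2 * (e j \<omega>)\<^sup>2) \<le> norm ((e i \<omega>)^4 + (e j \<omega>)^4)"
        proof (intro AE_I2)
          fix \<omega>
          have "2 * ((e i \<omega>)\<^sup>2 * (e j \<omega>)\<^sup>2) \<le> ((e i \<omega>)\<^sup>2)\<^sup>2 + ((e j \<omega>)\<^sup>2)\<^sup>2"
            using sum_squares_bound[of "(e i \<omega>)\<^sup>2" "(e j \<omega>)\<^sup>2"] by (simp add: power2_eq_square)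
          then show "norm ((e i \<omega>)\<^sup>2 * (e j \<omega>)\<^sup>2) \<le> norm ((e i \<omega>)^4 + (e j \<omega>)^4)"
            by (simp add: power_mult[symmetric] abs_mult) (smt (verit) zero_le_power2 mult_nonneg_nonneg)
        qed
      qed
    qed
    ultimately show ?thesis using intk[OF that(1), of 2] intk[OF that(2), of 2] by simp
  qed
  have EYY: "expectation (\<lambda>\<omega>. Y i \<omega> * Y j \<omega>) = (if i = j then 2 * \<sigma>^4 else 0)" if "i < n" "j < n" for i j
  proof (cases "i = j")
    case True
    have "(\<lambda>\<omega>. Y i \<omega> * Y i \<omega>) = (\<lambda>\<omega>. (e i \<omega>)^4 - 2 * \<sigma>\<^sup>2 * (e i \<omega>)\<^sup>2 + \<sigma>^4)"
      unfolding Y_def by (auto simp: fun_eq_iff algebra_simps power2_eq_square power4_eq_xxxx)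
    then have "expectation (\<lambda>\<omega>. Y i \<omega> * Y i \<omega>) = 3 * \<sigma>^4 - 2 * \<sigma>\<^sup>2 * \<sigma>\<^sup>2 + \<sigma>^4"
      using intk[OF that(1), of 4] intk[OF that(1), of 2] normal_moments(2,3)[OF P nd[OF that(1)] s]
      by (simp add: prob_space)
    then show ?thesis using True by (simp add: power2_eq_square power4_eq_xxxx)
  next
    case False
    have iv: "indep_vars (\<lambda>_. borel) Y {i, j}"
      unfolding Y_def
      by (rule indep_vars_compose2[where Y="\<lambda>_ x. x\<^sup>2 - \<sigma>\<^sup>2", OF indep_vars_subset[OF ind]])
         (use that in auto)
    have "expectation (\<lambda>\<omega>. \<Prod>k\<in>{i,j}. Y k \<omega>) = (\<Prod>k\<in>{i,j}. expectation (Y k))"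
      by (rule indep_vars_lebesgue_integral[OF _ iv]) (use that intY in auto)
    then show ?thesis using False EY[OF that(1)] EY[OF that(2)] by simp
  qed
  define f where "f \<omega> = (\<Sum>i<n. (e i \<omega>)\<^sup>2)" for \<omega>
  have fY: "f \<omega> - real n * \<sigma>\<^sup>2 = (\<Sum>i<n. Y i \<omega>)" for \<omega>
    unfolding f_def Y_def by (simp add: sum_subtractf)
  have fm: "f \<in> borel_measurable M" unfolding f_def by measurable
  have intf: "integrable M f" unfolding f_def using intk by (intro Bochner_Integration.integrable_sum) auto
  have Ef: "expectation f = real n * \<sigma>\<^sup>2"
  proof -
    have "expectation f = (\<Sum>i<n. expectation (\<lambda>\<omega>. (e i \<omega>)\<^sup>2))"
      unfolding f_def using intk by (intro Bochner_Integration.integral_sum) auto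
    also have "\<dots> = (\<Sum>i<n. \<sigma>\<^sup>2)" using normal_moments(2)[OF P nd s] by simp
    finally show ?thesis by simp
  qed
  have sqeq: "(\<lambda>\<omega>. (f \<omega> - real n * \<sigma>\<^sup>2)\<^sup>2) = (\<lambda>\<omega>. \<Sum>i<n. \<Sum>j<n. Y i \<omega> * Y j \<omega>)"
    unfolding fY by (simp add: power2_eq_square sum_product)
  have intsq: "integrable M (\<lambda>\<omega>. (f \<omega> - real n * \<sigma>\<^sup>2)\<^sup>2)"
    unfolding sqeq using intYY by (intro Bochner_Integration.integrable_sum) auto
  have intf2: "integrable M (\<lambda>\<omega>. (f \<omega>)^2)"
  proof -
    have "(\<lambda>\<omega>. (f \<omega>)^2) = (\<lambda>\<omega>. (f \<omega> - real n * \<sigma>\<^sup>2)\<^sup>2 + 2 * (real n * \<sigma>\<^sup>2) * f \<omega> - (real n * \<sigma>\<^sup>2)\<^sup>2)"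
      by (auto simp: fun_eq_iff power2_eq_square algebra_simps)
    then show ?thesis using intsq intf by simp
  qed
  have var: "variance f = 2 * real n * \<sigma>^4"
  proof -
    have "variance f = expectation (\<lambda>\<omega>. \<Sum>i<n. \<Sum>j<n. Y i \<omega> * Y j \<omega>)"
      unfolding Ef sqeq ..
    also have "\<dots> = (\<Sum>i<n. expectation (\<lambda>\<omega>. \<Sum>j<n. Y i \<omega> * Y j \<omega>))"
      by (rule Bochner_Integration.integral_sum) (auto intro!: Bochner_Integration.integrable_sum intYY)
    also have "\<dots> = (\<Sum>i<n. \<Sum>j<n. expectation (\<lambda>\<omega>. Y i \<omega> * Y j \<omega>))"
      by (intro sum.cong refl Bochner_Integration.integral_sum) (auto intro: intYY)
    also have "\<dots> = (\<Sum>i<n. \<Sum>j<n. (if i = j then 2 * \<sigma>^4 else 0))"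
      using EYY by simp
    also have "\<dots> = 2 * real n * \<sigma>^4" by (simp add: sum.delta)
    finally show ?thesis .
  qed
  have "prob {\<omega> \<in> space M. \<bar>f \<omega> - expectation f\<bar> \<ge> a} \<le> variance f / a\<^sup>2"
    by (rule Chebyshev_inequality[OF fm intf2 a])
  then have "prob {\<omega> \<in> space M. \<bar>f \<omega> - real n * \<sigma>\<^sup>2\<bar> \<ge> a} \<le> 2 * real n * \<sigma>^4 / a\<^sup>2"
    using var unfolding Ef by simp
  then show ?thesis by (simp add: f_def)
qed



lemma l2norm_L2: "l2norm n v = L2_set v {..<n}"
  unfolding l2norm_def L2_set_def ..

lemma l2_sum_triangle:
  assumes "finite J"
  shows "L2_set (\<lambda>i. \<Sum>j\<in>J. f j i) A \<le> (\<Sum>j\<in>J. L2_set (f j) A)"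
  using assms
proof (induction J rule: finite_induct)
  case empty
  then show ?case by (simp add: L2_set_def)
next
  case (insert x F)
  have "L2_set (\<lambda>i. \<Sum>j\<in>insert x F. f j i) A = L2_set (\<lambda>i. f x i + (\<Sum>j\<in>F. f j i)) A"
    using insert by simp
  also have "\<dots> \<le> L2_set (f x) A + L2_set (\<lambda>i. \<Sum>j\<in>F. f j i) A"
    by (rule L2_set_triangle_ineq)
  also have "\<dots> \<le> L2_set (f x) A + (\<Sum>j\<in>F. L2_set (f j) A)"
    using insert by simp
  finally show ?case using insert by simp
qed

lemma inner_le_l2: "\<bar>\<Sum>i<n. u i * v i\<bar> \<le> l2norm n u * l2norm n v"
proof -
  have "\<bar>\<Sum>i<n. u i * v i\<bar> \<le> (\<Sum>i<n. \<bar>u i\<bar> * \<bar>v i\<bar>)"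
    by (rule order_trans[OF sum_abs]) (simp add: abs_mult)
  also have "\<dots> \<le> l2norm n u * l2norm n v"
    unfolding l2norm_L2 by (rule L2_set_mult_ineq)
  finally show ?thesis .
qed

lemma l2norm_nonneg: "l2norm n v \<ge> 0"
  unfolding l2norm_def by (simp add: sum_nonneg)

lemma l1norm_nonneg: "l1norm p v \<ge> 0"
  unfolding l1norm_def by (simp add: sum_nonneg)

lemma l2norm_sq: "(l2norm n v)\<^sup>2 = (\<Sum>i<n. (v i)\<^sup>2)"
  unfolding l2norm_def by (simp add: sum_nonneg)

lemma core_lower:
  assumes g: "\<And>i. i < n \<Longrightarrow> g i = e i - (\<Sum>j<p. y j * V j i) - (\<Sum>j<p. z j * W j i)"
    and EV: "\<And>j. j < p \<Longrightarrow> \<bar>\<Sum>i<n. V j i * e i\<bar> \<le> K * l2norm n e"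
    and EW: "\<And>j. j < p \<Longrightarrow> \<bar>\<Sum>i<n. W j i * e i\<bar> \<le> K * l2norm n e"
    and K: "K \<ge> 0"
  shows "l2norm n g \<ge> l2norm n e - K * (l1norm p y + l1norm p z)"
proof (cases "l2norm n e = 0")
  case True
  then show ?thesis using K l2norm_nonneg[of n g] l1norm_nonneg[of p y] l1norm_nonneg[of p z]
    by (metis add_nonneg_nonneg diff_0 diff_left_mono mult_nonneg_nonneg neg_le_0_iff_le order.trans)
next
  case False
  then have pos: "l2norm n e > 0" using l2norm_nonneg[of n e] by linarith
  have "(\<Sum>i<n. e i * g i) = (\<Sum>i<n. (e i)\<^sup>2) - (\<Sum>j<p. y j * (\<Sum>i<n. V j i * e i)) - (\<Sum>j<p. z j * (\<Sum>i<n. W j i * e i))"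
  proof -
    have "(\<Sum>i<n. e i * g i) = (\<Sum>i<n. (e i)\<^sup>2 - (\<Sum>j<p. y j * (V j i * e i)) - (\<Sum>j<p. z j * (W j i * e i)))"
    proof (intro sum.cong refl)
      fix i assume "i \<in> {..<n}"
      then have "e i * g i = (e i)\<^sup>2 - (\<Sum>j<p. y j * V j i) * e i - (\<Sum>j<p. z j * W j i) * e i"
        by (simp add: g power2_eq_square right_diff_distrib mult.commute)
      then show "e i * g i = (e i)\<^sup>2 - (\<Sum>j<p. y j * (V j i * e i)) - (\<Sum>j<p. z j * (W j i * e i))"
        by (simp add: sum_distrib_right mult.assoc)
    qed
    also have "\<dots> = (\<Sum>i<n. (e i)\<^sup>2) - (\<Sum>i<n. \<Sum>j<p. y j * (V j i * e i)) - (\<Sum>i<n. \<Sum>j<p. z j * (W j i * e i))"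
      by (simp add: sum_subtractf)
    also have "(\<Sum>i<n. \<Sum>j<p. y j * (V j i * e i)) = (\<Sum>j<p. y j * (\<Sum>i<n. V j i * e i))"
      by (subst sum.swap) (simp add: sum_distrib_left)
    also have "(\<Sum>i<n. \<Sum>j<p. z j * (W j i * e i)) = (\<Sum>j<p. z j * (\<Sum>i<n. W j i * e i))"
      by (subst sum.swap) (simp add: sum_distrib_left)
    finally show ?thesis .
  qed
  moreover have "(\<Sum>j<p. y j * (\<Sum>i<n. V j i * e i)) \<le> K * l2norm n e * l1norm p y"
  proof -
    have "(\<Sum>j<p. y j * (\<Sum>i<n. V j i * e i)) \<le> (\<Sum>j<p. \<bar>y j\<bar> * (K * l2norm n e))"
    proof (rule sum_mono)
      fix j assume "j \<in> {..<p}"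
      then have "\<bar>\<Sum>i<n. V j i * e i\<bar> \<le> K * l2norm n e" using EV by auto
      then have "\<bar>y j\<bar> * \<bar>\<Sum>i<n. V j i * e i\<bar> \<le> \<bar>y j\<bar> * (K * l2norm n e)" by (rule mult_left_mono) simp
      moreover have "y j * (\<Sum>i<n. V j i * e i) \<le> \<bar>y j\<bar> * \<bar>\<Sum>i<n. V j i * e i\<bar>"
        by (metis abs_ge_self abs_mult)
      ultimately show "y j * (\<Sum>i<n. V j i * e i) \<le> \<bar>y j\<bar> * (K * l2norm n e)"
        by linarith
    qed
    also have "\<dots> = K * l2norm n e * l1norm p y"
      unfolding l1norm_def sum_distrib_left by (simp add: mult.commute)
    finally show ?thesis .
  qed
  moreover have "(\<Sum>j<p. z j * (\<Sum>i<n. W j i * e i)) \<le> K * l2norm n e * l1norm p z"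
  proof -
    have "(\<Sum>j<p. z j * (\<Sum>i<n. W j i * e i)) \<le> (\<Sum>j<p. \<bar>z j\<bar> * (K * l2norm n e))"
    proof (rule sum_mono)
      fix j assume "j \<in> {..<p}"
      then have "\<bar>\<Sum>i<n. W j i * e i\<bar> \<le> K * l2norm n e" using EW by auto
      then have "\<bar>z j\<bar> * \<bar>\<Sum>i<n. W j i * e i\<bar> \<le> \<bar>z j\<bar> * (K * l2norm n e)" by (rule mult_left_mono) simp
      moreover have "z j * (\<Sum>i<n. W j i * e i) \<le> \<bar>z j\<bar> * \<bar>\<Sum>i<n. W j i * e i\<bar>"
        by (metis abs_ge_self abs_mult)
      ultimately show "z j * (\<Sum>i<n. W j i * e i) \<le> \<bar>z j\<bar> * (K * l2norm n e)"
        by linarith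
    qed
    also have "\<dots> = K * l2norm n e * l1norm p z"
      unfolding l1norm_def sum_distrib_left by (simp add: mult.commute)
    finally show ?thesis .
  qed
  moreover have "(\<Sum>i<n. e i * g i) \<le> l2norm n e * l2norm n g"
    using inner_le_l2[where n=n and u=e and v=g] by linarith
  moreover have "(\<Sum>i<n. (e i)\<^sup>2) = l2norm n e * l2norm n e"
    using l2norm_sq[of n e] by (simp add: power2_eq_square)
  ultimately have "l2norm n e * (l2norm n e - K * (l1norm p y + l1norm p z)) \<le> l2norm n e * l2norm n g"
    by (simp add: algebra_simps)
  then show ?thesis using pos by simp
qed

lemma main_det:
  assumes g: "\<And>i. i < n \<Longrightarrow> g i = e i - (\<Sum>j<p. (b j - d j) * V j i) - (\<Sum>j<p. u j * W j i)"
    and EV: "\<And>j. j < p \<Longrightarrow> \<bar>\<Sum>i<n. V j i * e i\<bar> \<le> c * lam * sqrt n * l2norm n e"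
    and EW: "\<And>j. j < p \<Longrightarrow> \<bar>\<Sum>i<n. W j i * e i\<bar> \<le> c * lam * sqrt n * l2norm n e"
    and c: "0 \<le> c" "c < 1" and lam: "lam > 0" and n: "n > 0"
    and opt: "l2norm n g / sqrt n + lam * (l1norm p b + l1norm p u) \<le> l2norm n e / sqrt n + lam * (l1norm p d + l1norm p (\<lambda>_. 0))"
  shows "l1norm p b + l1norm p u \<le> (1 + c) / (1 - c) * l1norm p d"
proof -
  have sn: "sqrt n > 0" using n by simp
  have lb: "l2norm n g \<ge> l2norm n e - c * lam * sqrt n * (l1norm p (\<lambda>j. b j - d j) + l1norm p u)"
    by (rule core_lower[OF g EV EW]) (use c lam sn in \<open>auto intro!: mult_nonneg_nonneg\<close>)
  have tri: "l1norm p (\<lambda>j. b j - d j) \<le> l1norm p b + l1norm p d"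
    unfolding l1norm_def by (simp add: sum.distrib[symmetric] sum_mono abs_triangle_ineq4)
  have z: "l1norm p (\<lambda>_. 0) = 0" unfolding l1norm_def by simp
  have "l2norm n g / sqrt n \<ge> l2norm n e / sqrt n - c * lam * (l1norm p (\<lambda>j. b j - d j) + l1norm p u)"
  proof -
    have "(l2norm n e - c * lam * sqrt n * (l1norm p (\<lambda>j. b j - d j) + l1norm p u)) / sqrt n \<le> l2norm n g / sqrt n"
      using lb sn by (intro divide_right_mono) auto
    moreover have "(l2norm n e - c * lam * sqrt n * (l1norm p (\<lambda>j. b j - d j) + l1norm p u)) / sqrt n
       = l2norm n e / sqrt n - c * lam * (l1norm p (\<lambda>j. b j - d j) + l1norm p u)"
      using sn by (simp add: diff_divide_distrib)
    ultimately show ?thesis by simp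
  qed
  then have "lam * (l1norm p b + l1norm p u) \<le> lam * l1norm p d + c * lam * (l1norm p (\<lambda>j. b j - d j) + l1norm p u)"
  proof -
    have "l2norm n g / sqrt n + lam * (l1norm p b + l1norm p u) \<le> l2norm n e / sqrt n + lam * l1norm p d"
      using opt z by simp
    then show ?thesis using \<open>l2norm n g / sqrt n \<ge> _\<close> by linarith
  qed
  also have "\<dots> \<le> lam * l1norm p d + c * lam * (l1norm p b + l1norm p d + l1norm p u)"
    using tri c lam by (intro add_left_mono mult_left_mono) auto
  finally have "lam * ((1 - c) * (l1norm p b + l1norm p u)) \<le> lam * ((1 + c) * l1norm p d)"
    by (simp add: algebra_simps)
  then have "(1 - c) * (l1norm p b + l1norm p u) \<le> (1 + c) * l1norm p d"
    using lam by simp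
  then show ?thesis using c by (simp add: field_simps)
qed



lemma l2norm_cong: "(\<And>i. i < n \<Longrightarrow> f i = g i) \<Longrightarrow> l2norm n f = l2norm n g"
  unfolding l2norm_def by (intro arg_cong[where f=sqrt] sum.cong) auto

lemma DY_mdv: "DYi * mat_diag_vec p Zw L v i = (\<Sum>j<p. v j * (DYi * Zw i j * L j))"
  unfolding mat_diag_vec_def sum_distrib_left by (intro sum.cong refl) (simp add: algebra_simps)

lemma resid_eq2:
  assumes "DYi * Yi = DYi * mat_diag_vec p Zw LY beta i + e"
  shows "DYi * ((Yi - mat_diag_vec p Zw LY bh i) - mat_diag_vec p Zw LY b i) - DXi * mat_diag_vec p Zw LX u i
     = e - (\<Sum>j<p. (b j - (beta j - bh j)) * (DYi * Zw i j * LY j)) - (\<Sum>j<p. u j * (DXi * Zw i j * LX j))"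
proof -
  have "DYi * ((Yi - mat_diag_vec p Zw LY bh i) - mat_diag_vec p Zw LY b i) - DXi * mat_diag_vec p Zw LX u i
      = DYi * Yi - DYi * mat_diag_vec p Zw LY bh i - DYi * mat_diag_vec p Zw LY b i - DXi * mat_diag_vec p Zw LX u i"
    by (simp add: algebra_simps)
  also have "\<dots> = e + (\<Sum>j<p. beta j * (DYi * Zw i j * LY j)) - (\<Sum>j<p. bh j * (DYi * Zw i j * LY j))
       - (\<Sum>j<p. b j * (DYi * Zw i j * LY j)) - (\<Sum>j<p. u j * (DXi * Zw i j * LX j))"
    unfolding assms DY_mdv by simp
  also have "\<dots> = e - (\<Sum>j<p. (b j - (beta j - bh j)) * (DYi * Zw i j * LY j)) - (\<Sum>j<p. u j * (DXi * Zw i j * LX j))"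
    by (simp add: sum_subtractf sum.distrib algebra_simps)
  finally show ?thesis .
qed

lemma resid_eq1:
  assumes "DYi * Yi = DYi * mat_diag_vec p Zw LY beta i + e"
  shows "DYi * (Yi - mat_diag_vec p Zw LY bh i) = e + (\<Sum>j<p. (beta j - bh j) * (DYi * Zw i j * LY j))"
proof -
  have "DYi * (Yi - mat_diag_vec p Zw LY bh i) = DYi * Yi - DYi * mat_diag_vec p Zw LY bh i"
    by (simp add: algebra_simps)
  also have "\<dots> = e + (\<Sum>j<p. beta j * (DYi * Zw i j * LY j)) - (\<Sum>j<p. bh j * (DYi * Zw i j * LY j))"
    unfolding assms DY_mdv by simp
  also have "\<dots> = e + (\<Sum>j<p. (beta j - bh j) * (DYi * Zw i j * LY j))"
    by (simp add: sum_subtractf algebra_simps)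
  finally show ?thesis .
qed

lemma mdv_e0:
  assumes "p > 0"
  shows "mat_diag_vec p Zw L (\<lambda>j. bh j + (if j = 0 then t else 0)) i = mat_diag_vec p Zw L bh i + t * (Zw i 0 * L 0)"
proof -
  have "(\<Sum>j<p. Zw i j * L j * (if j = 0 then t else 0)) = (\<Sum>j<p. if j = 0 then Zw i 0 * L 0 * t else 0)"
    by (rule sum.cong) auto
  also have "\<dots> = t * (Zw i 0 * L 0)" using assms by simp
  finally show ?thesis unfolding mat_diag_vec_def distrib_left sum.distrib by simp
qed

lemma l1_e0:
  "l1norm p (\<lambda>j. bh j + (if j = 0 then t else 0)) \<le> l1norm p bh + \<bar>t\<bar>"
proof -
  have "l1norm p (\<lambda>j. bh j + (if j = 0 then t else 0)) \<le> (\<Sum>j<p. \<bar>bh j\<bar> + \<bar>if j = 0 then t else 0\<bar>)"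
    unfolding l1norm_def by (intro sum_mono abs_triangle_ineq)
  also have "\<dots> = l1norm p bh + (\<Sum>j<p. \<bar>if j = 0 then t else 0\<bar>)"
    unfolding l1norm_def by (simp add: sum.distrib)
  also have "(\<Sum>j<p. \<bar>if j = 0 then t else 0\<bar>) \<le> \<bar>t\<bar>"
    by (simp add: if_distrib sum.delta cong: if_cong)
  finally show ?thesis by simp
qed



lemma kkt_det:
  assumes n: "n > 0" and vv: "(\<Sum>i<n. (v i)\<^sup>2) = real n" and L: "L \<ge> 0"
    and H: "\<And>t. \<bar>t\<bar> = 1 / sqrt n \<Longrightarrow> l2norm n r - L * \<bar>t\<bar> \<le> l2norm n (\<lambda>i. r i - t * v i)"
  shows "\<bar>\<Sum>i<n. v i * r i\<bar> \<le> L * l2norm n r + L + sqrt n / 2"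
proof -
  define a where "a = (\<Sum>i<n. v i * r i)"
  have sn: "sqrt n > 0" using n by simp
  have lv: "l2norm n v = sqrt n" unfolding l2norm_def vv ..
  define t where "t = (if a \<ge> 0 then 1 / sqrt n else - 1 / sqrt n)"
  have at: "\<bar>t\<bar> = 1 / sqrt n" unfolding t_def using sn by auto
  have ta: "t * a = \<bar>a\<bar> / sqrt n" unfolding t_def by auto
  have t2: "t\<^sup>2 * real n = 1" unfolding t_def using n by (auto simp: power_divide)
  have sq: "(l2norm n (\<lambda>i. r i - t * v i))\<^sup>2 = (l2norm n r)\<^sup>2 - 2 * \<bar>a\<bar> / sqrt n + 1"
  proof -
    have "(l2norm n (\<lambda>i. r i - t * v i))\<^sup>2 = (\<Sum>i<n. (r i)\<^sup>2 - 2 * t * (v i * r i) + t\<^sup>2 * (v i)\<^sup>2)"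
      unfolding l2norm_sq by (intro sum.cong refl) (simp add: power2_eq_square algebra_simps)
    also have "\<dots> = (\<Sum>i<n. (r i)\<^sup>2) - 2 * t * a + t\<^sup>2 * (\<Sum>i<n. (v i)\<^sup>2)"
      unfolding a_def by (simp add: sum.distrib sum_subtractf sum_distrib_left)
    also have "\<dots> = (l2norm n r)\<^sup>2 - 2 * \<bar>a\<bar> / sqrt n + 1"
      using ta t2 vv by (simp add: l2norm_sq)
    finally show ?thesis .
  qed
  show ?thesis
  proof (cases "l2norm n r \<ge> L / sqrt n")
    case True
    have "l2norm n r - L / sqrt n \<le> l2norm n (\<lambda>i. r i - t * v i)"
      using H[OF at] at by simp
    then have "(l2norm n r - L / sqrt n)\<^sup>2 \<le> (l2norm n (\<lambda>i. r i - t * v i))\<^sup>2"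
      using True by (intro power_mono) auto
    then have "(l2norm n r)\<^sup>2 - 2 * l2norm n r * (L / sqrt n) + (L / sqrt n)\<^sup>2 \<le> (l2norm n r)\<^sup>2 - 2 * \<bar>a\<bar> / sqrt n + 1"
      unfolding sq by (simp add: power2_diff)
    then have "2 * \<bar>a\<bar> / sqrt n \<le> 2 * l2norm n r * L / sqrt n + 1"
      by (smt (verit) zero_le_power2 times_divide_eq_right)
    then have "2 * \<bar>a\<bar> \<le> 2 * l2norm n r * L + sqrt n"
      using sn by (simp add: field_simps)
    then show ?thesis using L sn unfolding a_def by (simp add: algebra_simps)
  next
    case False
    have "\<bar>a\<bar> \<le> l2norm n v * l2norm n r" unfolding a_def by (rule inner_le_l2)
    also have "\<dots> = sqrt n * l2norm n r" using lv by simp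
    also have "\<dots> \<le> L" using False sn by (simp add: field_simps)
    finally show ?thesis using L sn l2norm_nonneg[of n r] unfolding a_def
      by (smt (verit) mult_nonneg_nonneg divide_nonneg_nonneg)
  qed
qed

lemma l2_combo_bound:
  assumes vv: "\<And>j. j < p \<Longrightarrow> (\<Sum>i<n. (V j i)\<^sup>2) = real n"
  shows "l2norm n (\<lambda>i. \<Sum>j<p. d j * V j i) \<le> sqrt n * l1norm p d"
proof -
  have "l2norm n (\<lambda>i. \<Sum>j<p. d j * V j i) \<le> (\<Sum>j<p. L2_set (\<lambda>i. d j * V j i) {..<n})"
    unfolding l2norm_L2 by (rule l2_sum_triangle) simp
  also have "\<dots> = (\<Sum>j<p. \<bar>d j\<bar> * sqrt n)"
  proof (intro sum.cong refl)
    fix j assume "j \<in> {..<p}"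
    have "L2_set (\<lambda>i. d j * V j i) {..<n} = \<bar>d j\<bar> * L2_set (V j) {..<n}"
      by (simp add: L2_set_def power_mult_distrib sum_distrib_left[symmetric] real_sqrt_mult)
    also have "L2_set (V j) {..<n} = sqrt n" using vv \<open>j \<in> {..<p}\<close> by (simp add: L2_set_def)
    finally show "L2_set (\<lambda>i. d j * V j i) {..<n} = \<bar>d j\<bar> * sqrt n" .
  qed
  also have "\<dots> = sqrt n * l1norm p d" unfolding l1norm_def sum_distrib_left by (simp add: mult.commute)
  finally show ?thesis .
qed

lemma inner_combo_bound:
  assumes vv: "\<And>j. j < p \<Longrightarrow> (\<Sum>i<n. (V j i)\<^sup>2) = real n"
    and v: "(\<Sum>i<n. (w i)\<^sup>2) = real n"
  shows "\<bar>\<Sum>i<n. w i * (\<Sum>j<p. d j * V j i)\<bar> \<le> real n * l1norm p d"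
proof -
  have "\<bar>\<Sum>i<n. w i * (\<Sum>j<p. d j * V j i)\<bar> \<le> l2norm n w * l2norm n (\<lambda>i. \<Sum>j<p. d j * V j i)"
    by (rule inner_le_l2)
  also have "\<dots> \<le> sqrt n * (sqrt n * l1norm p d)"
    using l2_combo_bound[OF vv] v by (simp add: l2norm_def mult_left_mono)
  also have "\<dots> = real n * l1norm p d" by (simp add: mult.assoc[symmetric])
  finally show ?thesis .
qed



theorem lemma1:
  fixes M :: "nat \<Rightarrow> 'a measure"
    and p :: "nat \<Rightarrow> nat"
    and Y :: "nat \<Rightarrow> 'a \<Rightarrow> nat \<Rightarrow> real"
    and Z :: "nat \<Rightarrow> 'a \<Rightarrow> nat \<Rightarrow> nat \<Rightarrow> real"
    and DY DX :: "nat \<Rightarrow> 'a \<Rightarrow> nat \<Rightarrow> real"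
    and LY LX :: "nat \<Rightarrow> 'a \<Rightarrow> nat \<Rightarrow> real"
    and betaY :: "nat \<Rightarrow> nat \<Rightarrow> real"
    and epsY :: "nat \<Rightarrow> 'a \<Rightarrow> nat \<Rightarrow> real"
    and sigmaY A :: real
    and betahat betatilde etatilde :: "nat \<Rightarrow> 'a \<Rightarrow> nat \<Rightarrow> real"
  assumes prob: "\<And>n. prob_space (M n)"
    and norm_Y: "\<And>n \<omega> j. \<omega> \<in> space (M n) \<Longrightarrow> j < p n \<Longrightarrow>
          (\<Sum>i<n. (DY n \<omega> i * Z n \<omega> i j * LY n \<omega> j)\<^sup>2) = real n"
    and norm_X: "\<And>n \<omega> j. \<omega> \<in> space (M n) \<Longrightarrow> j < p n \<Longrightarrow>
          (\<Sum>i<n. (DX n \<omega> i * Z n \<omega> i j * LX n \<omega> j)\<^sup>2) = real n"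
    and model: "\<And>n \<omega> i. \<omega> \<in> space (M n) \<Longrightarrow> i < n \<Longrightarrow>
          DY n \<omega> i * Y n \<omega> i
            = DY n \<omega> i * mat_diag_vec (p n) (Z n \<omega>) (LY n \<omega>) (betaY n) i + epsY n \<omega> i"
    and sigma_pos: "sigmaY > 0"
    and eps_indep_cov: "\<And>n. prob_space.indep_var (M n)
          (Pi\<^sub>M (cov_set n (p n)) (\<lambda>_. borel))
          (\<lambda>\<omega>. restrict (cov_val (Z n \<omega>) (DY n \<omega>) (DX n \<omega>) (LY n \<omega>) (LX n \<omega>)) (cov_set n (p n)))
          (Pi\<^sub>M (CE ` {..<n}) (\<lambda>_. borel))
          (\<lambda>\<omega>. restrict (err_val (epsY n \<omega>)) (CE ` {..<n}))"
    and eps_indep: "\<And>n. prob_space.indep_vars (M n) (\<lambda>_. borel) (\<lambda>i \<omega>. epsY n \<omega> i) {..<n}"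
    and eps_normal: "\<And>n i. i < n \<Longrightarrow>
          distributed (M n) lborel (\<lambda>\<omega>. epsY n \<omega> i) (normal_density 0 sigmaY)"
    and A_gt: "A > 1"
    and betahat_meas: "\<And>n j. (\<lambda>\<omega>. betahat n \<omega> j) \<in> borel_measurable (M n)"
    and betatilde_meas: "\<And>n j. (\<lambda>\<omega>. betatilde n \<omega> j) \<in> borel_measurable (M n)"
    and etatilde_meas: "\<And>n j. (\<lambda>\<omega>. etatilde n \<omega> j) \<in> borel_measurable (M n)"
    and betahat_min: "\<And>n \<omega> b. \<omega> \<in> space (M n) \<Longrightarrow>
          obj1 n (p n) (A * sqrt (2 * ln (real (p n)) / real n)) (DY n \<omega>) (Z n \<omega>) (LY n \<omega>) (Y n \<omega>)
               (betahat n \<omega>)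
          \<le> obj1 n (p n) (A * sqrt (2 * ln (real (p n)) / real n)) (DY n \<omega>) (Z n \<omega>) (LY n \<omega>) (Y n \<omega>) b"
    and tilde_min: "\<And>n \<omega> b u. \<omega> \<in> space (M n) \<Longrightarrow>
          obj2 n (p n) (A * sqrt (2 * ln (real (p n)) / real n)) (DY n \<omega>) (DX n \<omega>) (Z n \<omega>)
               (LY n \<omega>) (LX n \<omega>)
               (\<lambda>i. Y n \<omega> i - mat_diag_vec (p n) (Z n \<omega>) (LY n \<omega>) (betahat n \<omega>) i)
               (betatilde n \<omega>) (etatilde n \<omega>)
          \<le> obj2 n (p n) (A * sqrt (2 * ln (real (p n)) / real n)) (DY n \<omega>) (DX n \<omega>) (Z n \<omega>)
               (LY n \<omega>) (LX n \<omega>)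
               (\<lambda>i. Y n \<omega> i - mat_diag_vec (p n) (Z n \<omega>) (LY n \<omega>) (betahat n \<omega>) i) b u"
    and rate: "\<exists>C'>0. (\<lambda>n. measure (M n) {\<omega> \<in> space (M n).
          l1norm (p n) (\<lambda>j. betahat n \<omega> j - betaY n j)
            > C' * real (card {j. j < p n \<and> betaY n j \<noteq> 0}) * sqrt (ln (real (p n)) / real n)})
          \<longlonglongrightarrow> 0"
    and sparsity: "(\<lambda>n. real (card {j. j < p n \<and> betaY n j \<noteq> 0}) * ln (real (p n)) / real n)
          \<longlonglongrightarrow> 0"
  shows "\<exists>C>0. (\<lambda>n. measure (M n) {\<omega> \<in> space (M n).
          l1norm (p n) (betatilde n \<omega>) + l1norm (p n) (etatilde n \<omega>)
            \<le> C * l1norm (p n) (\<lambda>j. betaY n j - betahat n \<omega> j)})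
          \<longlonglongrightarrow> 1"
proof -
  define lam where "lam n = A * sqrt (2 * ln (real (p n)) / real n)" for n
  define V where "V n \<omega> j i = DY n \<omega> i * Z n \<omega> i j * LY n \<omega> j" for n \<omega> j i
  define W where "W n \<omega> j i = DX n \<omega> i * Z n \<omega> i j * LX n \<omega> j" for n \<omega> j i
  define cv where "cv n \<omega> = restrict (cov_val (Z n \<omega>) (DY n \<omega>) (DX n \<omega>) (LY n \<omega>) (LX n \<omega>)) (cov_set n (p n))" for n \<omega>
  define ev where "ev n \<omega> = restrict (err_val (epsY n \<omega>)) (CE ` {..<n})" for n \<omega>
  define wV where "wV n j x i = (if i < n then x (CDY i) * x (CZ i j) * x (CLY j) else 0)" for n j and x :: "cidx \<Rightarrow> real" and i
  define wW where "wW n j x i = (if i < n then x (CDX i) * x (CZ i j) * x (CLX j) else 0)" for n j and x :: "cidx \<Rightarrow> real" and i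
  define N where "N = density lborel std_normal_density"
  define \<rho> where "\<rho> = (1 + 1/A) / 2"
  define c where "c = sqrt \<rho>"
  define \<kappa> where "\<kappa> = \<rho>\<^sup>2 * A\<^sup>2"
  define CC where "CC = (1 + c) / (1 - c)"
  have A0: "A > 0" using A_gt by simp
  have \<rho>0: "\<rho> > 0"
  proof -
    have h: "1 / A > 0" using A0 by simp
    show ?thesis unfolding \<rho>_def by (intro divide_pos_pos add_pos_pos h) simp_all
  qed
  have \<rho>1: "\<rho> < 1" unfolding \<rho>_def using A_gt by (simp add: field_simps)
  have \<rho>A: "\<rho> * A > 1" unfolding \<rho>_def using A_gt by (simp add: field_simps)
  have \<kappa>1: "\<kappa> > 1"
  proof -
    have "1 < (\<rho> * A)\<^sup>2" using \<rho>A by (simp add: less_1_mult power2_eq_square)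
    then show ?thesis unfolding \<kappa>_def by (simp add: power_mult_distrib)
  qed
  have c0: "c \<ge> 0" "c < 1" unfolding c_def using \<rho>0 \<rho>1 by auto
  have cc: "c * c = \<rho>" unfolding c_def using \<rho>0 by simp
  have CC0: "CC > 0" unfolding CC_def using c0 by simp

  have cv_eq: "cv n \<omega> (CDY i) = DY n \<omega> i" "cv n \<omega> (CDX i) = DX n \<omega> i"
      "cv n \<omega> (CZ i j) = Z n \<omega> i j" "cv n \<omega> (CLY j) = LY n \<omega> j" "cv n \<omega> (CLX j) = LX n \<omega> j"
    if "i < n" "j < p n" for n \<omega> i j
    using that by (auto simp: cv_def cov_set_def)
  have wV_eq: "wV n j (cv n \<omega>) i = V n \<omega> j i" "wW n j (cv n \<omega>) i = W n \<omega> j i"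
    if "i < n" "j < p n" for n \<omega> i j
    using cv_eq[OF that] that by (auto simp: wV_def wW_def V_def W_def)
  have ev_eq: "ev n \<omega> (CE i) = epsY n \<omega> i" if "i < n" for n \<omega> i
    using that by (auto simp: ev_def)
  have normV: "(\<Sum>i<n. (V n \<omega> j i)\<^sup>2) = real n" "(\<Sum>i<n. (W n \<omega> j i)\<^sup>2) = real n"
    if "\<omega> \<in> space (M n)" "j < p n" for n \<omega> j
    using norm_Y[OF that] norm_X[OF that] by (auto simp: V_def W_def)
  have epsm: "(\<lambda>\<omega>. epsY n \<omega> i) \<in> borel_measurable (M n)" if "i < n" for n i
    using distributed_measurable[OF eps_normal[OF that]] by simp
  have wVm: "(\<lambda>x. wV n j x i) \<in> borel_measurable (Pi\<^sub>M (cov_set n (p n)) (\<lambda>_. borel))"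
    "(\<lambda>x. wW n j x i) \<in> borel_measurable (Pi\<^sub>M (cov_set n (p n)) (\<lambda>_. borel))" if "j < p n" for n j i
  proof -
    show "(\<lambda>x. wV n j x i) \<in> borel_measurable (Pi\<^sub>M (cov_set n (p n)) (\<lambda>_. borel))"
    proof (cases "i < n")
      case True
      have "CDY i \<in> cov_set n (p n)" "CZ i j \<in> cov_set n (p n)" "CLY j \<in> cov_set n (p n)"
        using True that by (auto simp: cov_set_def)
      then show ?thesis unfolding wV_def using True
        by (auto intro!: borel_measurable_times measurable_component_singleton)
    qed (simp add: wV_def)
    show "(\<lambda>x. wW n j x i) \<in> borel_measurable (Pi\<^sub>M (cov_set n (p n)) (\<lambda>_. borel))"
    proof (cases "i < n")
      case True
      have "CDX i \<in> cov_set n (p n)" "CZ i j \<in> cov_set n (p n)" "CLX j \<in> cov_set n (p n)"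
        using True that by (auto simp: cov_set_def)
      then show ?thesis unfolding wW_def using True
        by (auto intro!: borel_measurable_times measurable_component_singleton)
    qed (simp add: wW_def)
  qed
  have iv: "prob_space.indep_var (M n) (Pi\<^sub>M (cov_set n (p n)) (\<lambda>_. borel)) (cv n) (Pi\<^sub>M (CE ` {..<n}) (\<lambda>_. borel)) (ev n)" for n
  proof -
    have "cv n = (\<lambda>\<omega>. restrict (cov_val (Z n \<omega>) (DY n \<omega>) (DX n \<omega>) (LY n \<omega>) (LX n \<omega>)) (cov_set n (p n)))"
      "ev n = (\<lambda>\<omega>. restrict (err_val (epsY n \<omega>)) (CE ` {..<n}))"
      by (simp_all add: fun_eq_iff cv_def ev_def)
    then show ?thesis using eps_indep_cov[of n] by simp
  qed
  have PT: "measure (M n) {\<omega>\<in>space (M n). (\<Sum>i<n. V n \<omega> j i * epsY n \<omega> i) / (sigmaY * sqrt n) \<in> B} = measure N B"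
     "{\<omega>\<in>space (M n). (\<Sum>i<n. V n \<omega> j i * epsY n \<omega> i) / (sigmaY * sqrt n) \<in> B} \<in> sets (M n)"
     "measure (M n) {\<omega>\<in>space (M n). (\<Sum>i<n. W n \<omega> j i * epsY n \<omega> i) / (sigmaY * sqrt n) \<in> B} = measure N B"
     "{\<omega>\<in>space (M n). (\<Sum>i<n. W n \<omega> j i * epsY n \<omega> i) / (sigmaY * sqrt n) \<in> B} \<in> sets (M n)"
    if n: "n > 0" and j: "j < p n" and B: "B \<in> sets borel" for n j B
  proof -
    have sV: "(\<Sum>i<n. wV n j (cv n \<omega>) i * epsY n \<omega> i) = (\<Sum>i<n. V n \<omega> j i * epsY n \<omega> i)"
      "(\<Sum>i<n. wW n j (cv n \<omega>) i * epsY n \<omega> i) = (\<Sum>i<n. W n \<omega> j i * epsY n \<omega> i)"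
      "(\<Sum>i<n. (wV n j (cv n \<omega>) i)\<^sup>2) = (\<Sum>i<n. (V n \<omega> j i)\<^sup>2)"
      "(\<Sum>i<n. (wW n j (cv n \<omega>) i)\<^sup>2) = (\<Sum>i<n. (W n \<omega> j i)\<^sup>2)" for \<omega>
      by (rule sum.cong; simp add: wV_eq j)+
    have eqV: "{\<omega>\<in>space (M n). (\<Sum>i<n. V n \<omega> j i * epsY n \<omega> i) / (sigmaY * sqrt n) \<in> B}
       = {\<omega>\<in>space (M n). (\<Sum>i<n. wV n j (cv n \<omega>) i * epsY n \<omega> i) / (sigmaY * sqrt n) \<in> B}"
      by (simp only: sV)
    have eqW: "{\<omega>\<in>space (M n). (\<Sum>i<n. W n \<omega> j i * epsY n \<omega> i) / (sigmaY * sqrt n) \<in> B}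
       = {\<omega>\<in>space (M n). (\<Sum>i<n. wW n j (cv n \<omega>) i * epsY n \<omega> i) / (sigmaY * sqrt n) \<in> B}"
      by (simp only: sV)
    have nV: "(\<Sum>i<n. (wV n j (cv n \<omega>) i)\<^sup>2) = real n" "(\<Sum>i<n. (wW n j (cv n \<omega>) i)\<^sup>2) = real n"
      if "\<omega> \<in> space (M n)" for \<omega>
      using normV[OF that j] by (simp_all only: sV)
    note mV = mix_std_normal[where e="\<lambda>i \<omega>. epsY n \<omega> i", OF prob iv ev_eq eps_indep eps_normal sigma_pos n wVm(1)[OF j] nV(1) B]
    note mW = mix_std_normal[where e="\<lambda>i \<omega>. epsY n \<omega> i", OF prob iv ev_eq eps_indep eps_normal sigma_pos n wVm(2)[OF j] nV(2) B]
    show "measure (M n) {\<omega>\<in>space (M n). (\<Sum>i<n. V n \<omega> j i * epsY n \<omega> i) / (sigmaY * sqrt n) \<in> B} = measure N B"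
      unfolding eqV N_def using mV(1) .
    show "{\<omega>\<in>space (M n). (\<Sum>i<n. V n \<omega> j i * epsY n \<omega> i) / (sigmaY * sqrt n) \<in> B} \<in> sets (M n)"
      unfolding eqV using mV(2) .
    show "measure (M n) {\<omega>\<in>space (M n). (\<Sum>i<n. W n \<omega> j i * epsY n \<omega> i) / (sigmaY * sqrt n) \<in> B} = measure N B"
      unfolding eqW N_def using mW(1) .
    show "{\<omega>\<in>space (M n). (\<Sum>i<n. W n \<omega> j i * epsY n \<omega> i) / (sigmaY * sqrt n) \<in> B} \<in> sets (M n)"
      unfolding eqW using mW(2) .
  qed
  have Pchi: "measure (M n) {\<omega> \<in> space (M n). \<bar>(\<Sum>i<n. (epsY n \<omega> i)\<^sup>2) - real n * sigmaY\<^sup>2\<bar> \<ge> a} \<le> 2 * real n * sigmaY^4 / a\<^sup>2"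
    if "a > 0" for n a
    using chi_square_chebyshev[where e="\<lambda>i \<omega>. epsY n \<omega> i", OF prob eps_indep eps_normal sigma_pos that] .
  have Schi: "{\<omega> \<in> space (M n). \<bar>(\<Sum>i<n. (epsY n \<omega> i)\<^sup>2) - real n * sigmaY\<^sup>2\<bar> \<ge> a} \<in> sets (M n)" for n a
  proof -
    have "(\<lambda>\<omega>. \<bar>(\<Sum>i<n. (epsY n \<omega> i)\<^sup>2) - real n * sigmaY\<^sup>2\<bar>) \<in> borel_measurable (M n)"
      using epsm by (intro borel_measurable_abs borel_measurable_diff borel_measurable_sum borel_measurable_power) auto
    then show ?thesis by measurable
  qed
  have lam_sqrt: "lam n * sqrt (real n) = A * sqrt (2 * ln (real (p n)))" if "n > 0" for n
    unfolding lam_def using that by (simp add: real_sqrt_divide)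
  have concl_det: "l1norm (p n) (betatilde n \<omega>) + l1norm (p n) (etatilde n \<omega>)
       \<le> CC * l1norm (p n) (\<lambda>j. betaY n j - betahat n \<omega> j)"
    if \<omega>: "\<omega> \<in> space (M n)" and n: "n > 0" and p2: "p n \<ge> 2"
     and EV: "\<And>j. j < p n \<Longrightarrow> \<bar>\<Sum>i<n. V n \<omega> j i * epsY n \<omega> i\<bar> \<le> c * lam n * sqrt n * l2norm n (epsY n \<omega>)"
     and EW: "\<And>j. j < p n \<Longrightarrow> \<bar>\<Sum>i<n. W n \<omega> j i * epsY n \<omega> i\<bar> \<le> c * lam n * sqrt n * l2norm n (epsY n \<omega>)"
    for n \<omega>
  proof -
    have "ln (real (p n)) > 0" using p2 by simp
    then have lampos: "lam n > 0" unfolding lam_def using A0 n by simp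
    define Yt where "Yt i = Y n \<omega> i - mat_diag_vec (p n) (Z n \<omega>) (LY n \<omega>) (betahat n \<omega>) i" for i
    define d where "d j = betaY n j - betahat n \<omega> j" for j
    have g_eq: "DY n \<omega> i * (Yt i - mat_diag_vec (p n) (Z n \<omega>) (LY n \<omega>) b i) - DX n \<omega> i * mat_diag_vec (p n) (Z n \<omega>) (LX n \<omega>) u i
       = epsY n \<omega> i - (\<Sum>j<p n. (b j - d j) * V n \<omega> j i) - (\<Sum>j<p n. u j * W n \<omega> j i)"
      if "i < n" for b u i
      unfolding Yt_def d_def V_def W_def by (rule resid_eq2[OF model[OF \<omega> that]])
    have obj2_eq: "obj2 n (p n) (lam n) (DY n \<omega>) (DX n \<omega>) (Z n \<omega>) (LY n \<omega>) (LX n \<omega>) Yt b u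
      = l2norm n (\<lambda>i. epsY n \<omega> i - (\<Sum>j<p n. (b j - d j) * V n \<omega> j i) - (\<Sum>j<p n. u j * W n \<omega> j i)) / sqrt n
        + lam n * (l1norm (p n) b + l1norm (p n) u)" for b u
      unfolding obj2_def by (subst l2norm_cong[OF g_eq]) auto
    have opt0: "obj2 n (p n) (lam n) (DY n \<omega>) (DX n \<omega>) (Z n \<omega>) (LY n \<omega>) (LX n \<omega>) Yt (betatilde n \<omega>) (etatilde n \<omega>)
       \<le> obj2 n (p n) (lam n) (DY n \<omega>) (DX n \<omega>) (Z n \<omega>) (LY n \<omega>) (LX n \<omega>) Yt d (\<lambda>_. 0)"
      using tilde_min[OF \<omega>, of d "\<lambda>_. 0"] unfolding lam_def Yt_def by simp
    have eps_eq: "l2norm n (\<lambda>i. epsY n \<omega> i - (\<Sum>j<p n. (d j - d j) * V n \<omega> j i) - (\<Sum>j<p n. 0 * W n \<omega> j i))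
       = l2norm n (epsY n \<omega>)" by simp
    have opt: "l2norm n (\<lambda>i. epsY n \<omega> i - (\<Sum>j<p n. (betatilde n \<omega> j - d j) * V n \<omega> j i) - (\<Sum>j<p n. etatilde n \<omega> j * W n \<omega> j i)) / sqrt n
        + lam n * (l1norm (p n) (betatilde n \<omega>) + l1norm (p n) (etatilde n \<omega>))
       \<le> l2norm n (epsY n \<omega>) / sqrt n + lam n * (l1norm (p n) d + l1norm (p n) (\<lambda>_. 0))"
      using opt0 unfolding obj2_eq eps_eq .
    have "l1norm (p n) (betatilde n \<omega>) + l1norm (p n) (etatilde n \<omega>) \<le> (1 + c) / (1 - c) * l1norm (p n) d"
      by (rule main_det[OF _ EV EW c0 lampos n opt]) simp
    then show ?thesis unfolding CC_def d_def .
  qed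
  define L0 where "L0 P0 = A * sqrt (2 * ln P0)" for P0 :: real
  define TT where "TT P0 C' = C' * P0 * sqrt (ln P0)" for P0 C' :: real
  define MM where "MM P0 C' = (2 * sigmaY * L0 P0 + L0 P0 * TT P0 C' + L0 P0 + 1/2 + TT P0 C') / sigmaY" for P0 C' :: real
  have anti_det: "\<bar>\<Sum>i<n. V n \<omega> 0 i * epsY n \<omega> i\<bar> / (sigmaY * sqrt n) \<le> MM P0 C'"
    if \<omega>: "\<omega> \<in> space (M n)" and n: "n > 0" and p1: "1 \<le> p n" and pP: "real (p n) < P0" and C': "C' > 0"
     and R: "l1norm (p n) (\<lambda>j. betahat n \<omega> j - betaY n j)
            \<le> C' * real (card {j. j < p n \<and> betaY n j \<noteq> 0}) * sqrt (ln (real (p n)) / real n)"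
     and H: "(\<Sum>i<n. (epsY n \<omega> i)\<^sup>2) \<le> 4 * real n * sigmaY\<^sup>2"
    for n \<omega> P0 C'
  proof -
    have sn: "sqrt n \<ge> 1" using n by simp
    have p0: "0 < p n" using p1 by simp
    have nV0: "(\<Sum>i<n. (V n \<omega> 0 i)\<^sup>2) = real n" by (rule normV(1)[OF \<omega> p0])
    have P0: "P0 > 1" using p1 pP by linarith
    define d where "d j = betaY n j - betahat n \<omega> j" for j
    have l1d: "l1norm (p n) d = l1norm (p n) (\<lambda>j. betahat n \<omega> j - betaY n j)"
      unfolding l1norm_def d_def by (simp add: abs_minus_commute)
    have lnp: "0 \<le> ln (real (p n))" "ln (real (p n)) \<le> ln P0" using p1 pP by auto
    have card: "real (card {j. j < p n \<and> betaY n j \<noteq> 0}) \<le> P0"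
    proof -
      have "card {j. j < p n \<and> betaY n j \<noteq> 0} \<le> card {..<p n}" by (intro card_mono) auto
      then show ?thesis using pP by simp
    qed
    have dT: "l1norm (p n) d \<le> TT P0 C' / sqrt n"
    proof -
      have "sqrt (ln (real (p n)) / real n) = sqrt (ln (real (p n))) / sqrt n" by (simp add: real_sqrt_divide)
      also have "\<dots> \<le> sqrt (ln P0) / sqrt n" using lnp sn by (intro divide_right_mono) auto
      finally have "C' * real (card {j. j < p n \<and> betaY n j \<noteq> 0}) * sqrt (ln (real (p n)) / real n)
          \<le> C' * P0 * (sqrt (ln P0) / sqrt n)"
        using card C' lnp by (intro mult_mono) auto
      then show ?thesis using R l1d unfolding TT_def by simp
    qed
    define r where "r i = DY n \<omega> i * (Y n \<omega> i - mat_diag_vec (p n) (Z n \<omega>) (LY n \<omega>) (betahat n \<omega>) i)" for i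
    have r_eq: "r i = epsY n \<omega> i + (\<Sum>j<p n. d j * V n \<omega> j i)" if "i < n" for i
      unfolding r_def d_def V_def by (rule resid_eq1[OF model[OF \<omega> that]])
    define L where "L = lam n * sqrt n"
    have L: "L = A * sqrt (2 * ln (real (p n)))" unfolding L_def using lam_sqrt n by simp
    have L0: "0 \<le> L" "L \<le> L0 P0" unfolding L L0_def using lnp A0 by auto
    have lam0: "lam n \<ge> 0" unfolding lam_def using lnp A0 by simp
    have H1: "l2norm n r - L * \<bar>t\<bar> \<le> l2norm n (\<lambda>i. r i - t * V n \<omega> 0 i)" for t
    proof -
      have "obj1 n (p n) (lam n) (DY n \<omega>) (Z n \<omega>) (LY n \<omega>) (Y n \<omega>) (betahat n \<omega>)
          \<le> obj1 n (p n) (lam n) (DY n \<omega>) (Z n \<omega>) (LY n \<omega>) (Y n \<omega>) (\<lambda>j. betahat n \<omega> j + (if j = 0 then t else 0))"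
        using betahat_min[OF \<omega>] unfolding lam_def by simp
      moreover have "obj1 n (p n) (lam n) (DY n \<omega>) (Z n \<omega>) (LY n \<omega>) (Y n \<omega>) (betahat n \<omega>)
          = l2norm n r / sqrt n + lam n * l1norm (p n) (betahat n \<omega>)"
        unfolding obj1_def r_def ..
      moreover have "obj1 n (p n) (lam n) (DY n \<omega>) (Z n \<omega>) (LY n \<omega>) (Y n \<omega>) (\<lambda>j. betahat n \<omega> j + (if j = 0 then t else 0))
          = l2norm n (\<lambda>i. r i - t * V n \<omega> 0 i) / sqrt n + lam n * l1norm (p n) (\<lambda>j. betahat n \<omega> j + (if j = 0 then t else 0))"
        unfolding obj1_def
        by (subst l2norm_cong[where g="\<lambda>i. r i - t * V n \<omega> 0 i"])
           (use p1 in \<open>simp_all add: mdv_e0 r_def V_def algebra_simps\<close>)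
      moreover have "lam n * l1norm (p n) (\<lambda>j. betahat n \<omega> j + (if j = 0 then t else 0))
          \<le> lam n * (l1norm (p n) (betahat n \<omega>) + \<bar>t\<bar>)"
        by (rule mult_left_mono[OF l1_e0 lam0])
      ultimately have "l2norm n r / sqrt n \<le> l2norm n (\<lambda>i. r i - t * V n \<omega> 0 i) / sqrt n + lam n * \<bar>t\<bar>"
        by (simp add: algebra_simps)
      then have "l2norm n r / sqrt n * sqrt n \<le> (l2norm n (\<lambda>i. r i - t * V n \<omega> 0 i) / sqrt n + lam n * \<bar>t\<bar>) * sqrt n"
        using sn by (intro mult_right_mono) auto
      then show ?thesis using sn unfolding L_def by (simp add: algebra_simps)
    qed
    have kkt: "\<bar>\<Sum>i<n. V n \<omega> 0 i * r i\<bar> \<le> L * l2norm n r + L + sqrt n / 2"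
      by (rule kkt_det[OF n nV0 L0(1) H1])
    have comb: "\<bar>\<Sum>i<n. V n \<omega> 0 i * (\<Sum>j<p n. d j * V n \<omega> j i)\<bar> \<le> real n * l1norm (p n) d"
      by (rule inner_combo_bound[OF normV(1)[OF \<omega>] nV0])
    have split: "(\<Sum>i<n. V n \<omega> 0 i * epsY n \<omega> i) = (\<Sum>i<n. V n \<omega> 0 i * r i) - (\<Sum>i<n. V n \<omega> 0 i * (\<Sum>j<p n. d j * V n \<omega> j i))"
      unfolding sum_subtractf[symmetric] by (rule sum.cong) (simp_all add: r_eq algebra_simps)
    have eps2: "l2norm n (epsY n \<omega>) \<le> 2 * sigmaY * sqrt n"
    proof -
      have "l2norm n (epsY n \<omega>) \<le> sqrt (4 * real n * sigmaY\<^sup>2)" unfolding l2norm_def using H by simp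
      also have "\<dots> = 2 * sigmaY * sqrt n" using sigma_pos by (simp add: real_sqrt_mult)
      finally show ?thesis .
    qed
    have rb: "l2norm n r \<le> 2 * sigmaY * sqrt n + TT P0 C'"
    proof -
      have "l2norm n r = L2_set (\<lambda>i. epsY n \<omega> i + (\<Sum>j<p n. d j * V n \<omega> j i)) {..<n}"
        unfolding l2norm_L2[symmetric] by (rule l2norm_cong) (simp add: r_eq)
      also have "\<dots> \<le> l2norm n (epsY n \<omega>) + l2norm n (\<lambda>i. \<Sum>j<p n. d j * V n \<omega> j i)"
        unfolding l2norm_L2 by (rule L2_set_triangle_ineq)
      also have "l2norm n (\<lambda>i. \<Sum>j<p n. d j * V n \<omega> j i) \<le> sqrt n * l1norm (p n) d"
        by (rule l2_combo_bound[OF normV(1)[OF \<omega>]])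
      also have "sqrt n * l1norm (p n) d \<le> TT P0 C'"
        using dT sn by (simp add: field_simps)
      finally show ?thesis using eps2 by simp
    qed
    have T0: "TT P0 C' \<ge> 0" unfolding TT_def using C' P0 by simp
    have "\<bar>\<Sum>i<n. V n \<omega> 0 i * epsY n \<omega> i\<bar> \<le> L * l2norm n r + L + sqrt n / 2 + real n * l1norm (p n) d"
      unfolding split using kkt comb by linarith
    also have "\<dots> \<le> L0 P0 * (2 * sigmaY * sqrt n + TT P0 C') + L0 P0 + sqrt n / 2 + sqrt n * TT P0 C'"
    proof -
      have "L * l2norm n r \<le> L0 P0 * (2 * sigmaY * sqrt n + TT P0 C')"
        using L0 rb l2norm_nonneg[of n r] by (intro mult_mono) auto
      moreover have "real n * l1norm (p n) d \<le> sqrt n * TT P0 C'"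
      proof -
        have "real n = sqrt n * sqrt n" by simp
        then have "real n * l1norm (p n) d = sqrt n * (sqrt n * l1norm (p n) d)" by simp
        also have "\<dots> \<le> sqrt n * TT P0 C'" using dT sn by (intro mult_left_mono) (auto simp: field_simps)
        finally show ?thesis .
      qed
      ultimately show ?thesis using L0 by linarith
    qed
    also have "\<dots> \<le> sqrt n * (sigmaY * MM P0 C')"
    proof -
      have L00: "L0 P0 \<ge> 0" unfolding L0_def using A0 P0 by simp
      have "1 * (L0 P0 * TT P0 C') \<le> sqrt n * (L0 P0 * TT P0 C')"
        by (rule mult_right_mono[OF sn]) (use L00 T0 in simp)
      moreover have "1 * L0 P0 \<le> sqrt n * L0 P0" by (rule mult_right_mono[OF sn L00])
      moreover have "sigmaY * MM P0 C' = 2 * sigmaY * L0 P0 + L0 P0 * TT P0 C' + L0 P0 + 1/2 + TT P0 C'"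
        unfolding MM_def using sigma_pos by simp
      ultimately show ?thesis by (simp add: algebra_simps)
    qed
    finally show ?thesis using sigma_pos sn by (simp add: field_simps)
  qed
  define Concl where "Concl n = {\<omega> \<in> space (M n).
          l1norm (p n) (betatilde n \<omega>) + l1norm (p n) (etatilde n \<omega>)
            \<le> CC * l1norm (p n) (\<lambda>j. betaY n j - betahat n \<omega> j)}" for n
  have Sconcl: "Concl n \<in> sets (M n)" for n
  proof -
    note [measurable] = betatilde_meas etatilde_meas betahat_meas
    show ?thesis unfolding Concl_def l1norm_def by measurable
  qed
  define tt where "tt n = \<rho> * A * sqrt (2 * ln (real (p n)))" for n
  define TV where "TV n j = {\<omega>\<in>space (M n). (\<Sum>i<n. V n \<omega> j i * epsY n \<omega> i) / (sigmaY * sqrt n) \<in> {x. \<bar>x\<bar> > tt n}}" for n j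
  define TW where "TW n j = {\<omega>\<in>space (M n). (\<Sum>i<n. W n \<omega> j i * epsY n \<omega> i) / (sigmaY * sqrt n) \<in> {x. \<bar>x\<bar> > tt n}}" for n j
  define Chi where "Chi n = {\<omega> \<in> space (M n). \<bar>(\<Sum>i<n. (epsY n \<omega> i)\<^sup>2) - real n * sigmaY\<^sup>2\<bar> \<ge> (1 - \<rho>) * real n * sigmaY\<^sup>2}" for n
  have tail: "measure N {x. \<bar>x\<bar> > tt n} \<le> 2 * real (p n) powr (-\<kappa>)" if "p n \<ge> 2" for n
  proof -
    interpret NP: prob_space N unfolding N_def by (rule prob_space_normal_density) simp
    have lnp: "ln (real (p n)) > 0" using that by simp
    have t0: "tt n \<ge> 0" unfolding tt_def using \<rho>0 A0 lnp by simp
    have "(tt n)\<^sup>2 / 2 = \<kappa> * ln (real (p n))"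
      unfolding tt_def \<kappa>_def using lnp by (simp add: power_mult_distrib)
    then have "exp (-((tt n)^2)/2) = real (p n) powr (-\<kappa>)"
      using that by (simp add: powr_def)
    moreover have "emeasure N {x. \<bar>x\<bar> > tt n} \<le> ennreal (2 * exp (-((tt n)^2)/2))"
      unfolding N_def by (rule std_normal_tail[OF t0])
    ultimately show ?thesis
      by (simp add: NP.emeasure_eq_measure ennreal_le_iff)
  qed
  have good: "\<omega> \<in> Concl n"
    if \<omega>: "\<omega> \<in> space (M n)" and n: "n > 0" and p2: "p n \<ge> 2" and nC: "\<omega> \<notin> Chi n"
     and nT: "\<And>j. j < p n \<Longrightarrow> \<omega> \<notin> TV n j \<and> \<omega> \<notin> TW n j" for n \<omega>
  proof -
    have sn: "sqrt n > 0" using n by simp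
    have "(\<Sum>i<n. (epsY n \<omega> i)\<^sup>2) > \<rho> * real n * sigmaY\<^sup>2" using nC \<omega> unfolding Chi_def by (auto simp: algebra_simps)
    then have "l2norm n (epsY n \<omega>) \<ge> sqrt (\<rho> * real n * sigmaY\<^sup>2)" unfolding l2norm_def by simp
    also have "sqrt (\<rho> * real n * sigmaY\<^sup>2) = c * sigmaY * sqrt n"
      unfolding c_def using sigma_pos \<rho>0 by (simp add: real_sqrt_mult)
    finally have eb: "c * sigmaY * sqrt n \<le> l2norm n (epsY n \<omega>)" .
    have key: "tt n * (sigmaY * sqrt n) \<le> c * lam n * sqrt n * l2norm n (epsY n \<omega>)"
    proof -
      have "tt n * (sigmaY * sqrt n) = c * (lam n * sqrt n) * (c * sigmaY * sqrt n)"
        unfolding tt_def lam_sqrt[OF n] using cc by (simp add: algebra_simps)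
      also have "\<dots> \<le> c * (lam n * sqrt n) * l2norm n (epsY n \<omega>)"
        using eb c0 p2 A0 unfolding lam_sqrt[OF n] by (intro mult_left_mono) auto
      finally show ?thesis by (simp add: algebra_simps)
    qed
    have bnd: "\<bar>s\<bar> \<le> c * lam n * sqrt n * l2norm n (epsY n \<omega>)" if "\<not> \<bar>s / (sigmaY * sqrt n)\<bar> > tt n" for s
    proof -
      have "\<bar>sigmaY * sqrt n\<bar> = sigmaY * sqrt n" using sigma_pos sn by simp
      then have "\<bar>s\<bar> / (sigmaY * sqrt n) \<le> tt n" using that by (simp add: abs_divide)
      then have "\<bar>s\<bar> \<le> tt n * (sigmaY * sqrt n)" using sigma_pos sn by (simp add: field_simps)
      then show ?thesis using key by linarith
    qed
    show ?thesis unfolding Concl_def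
      using concl_det[OF \<omega> n p2] bnd nT \<omega> unfolding TV_def TW_def by auto
  qed
  have Pbound: "measure (M n) (Concl n) \<ge> 1 - 2 / ((1 - \<rho>)\<^sup>2 * real n) - 4 * real (p n) powr (1 - \<kappa>)"
    if n: "n > 0" and p2: "p n \<ge> 2" for n
  proof -
    interpret MP: prob_space "M n" by (rule prob)
    have Bs: "{x::real. \<bar>x\<bar> > tt n} \<in> sets borel" by measurable
    have STV: "TV n j \<in> sets (M n)" "TW n j \<in> sets (M n)" if "j < p n" for j
      unfolding TV_def TW_def by (rule PT(2)[OF n that Bs], rule PT(4)[OF n that Bs])
    have PTV: "measure (M n) (TV n j) \<le> 2 * real (p n) powr (-\<kappa>)" "measure (M n) (TW n j) \<le> 2 * real (p n) powr (-\<kappa>)"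
      if "j < p n" for j
      unfolding TV_def TW_def using PT(1)[OF n that Bs] PT(3)[OF n that Bs] tail[OF p2] by auto
    have SC: "Chi n \<in> sets (M n)" unfolding Chi_def by (rule Schi)
    have PC: "measure (M n) (Chi n) \<le> 2 / ((1 - \<rho>)\<^sup>2 * real n)"
    proof -
      have a: "(1 - \<rho>) * real n * sigmaY\<^sup>2 > 0" using \<rho>1 n sigma_pos by simp
      have "measure (M n) (Chi n) \<le> 2 * real n * sigmaY^4 / ((1 - \<rho>) * real n * sigmaY\<^sup>2)\<^sup>2"
        unfolding Chi_def by (rule Pchi[OF a])
      also have "\<dots> = 2 / ((1 - \<rho>)\<^sup>2 * real n)"
      proof -
        have e1: "((1 - \<rho>) * real n * sigmaY\<^sup>2)\<^sup>2 = ((1 - \<rho>)\<^sup>2 * real n) * (real n * sigmaY^4)"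
          by (simp add: algebra_simps power2_eq_square power4_eq_xxxx)
        have "(1 - \<rho>)\<^sup>2 * real n > 0" "real n * sigmaY^4 > 0" using \<rho>1 n sigma_pos by simp_all
        then show ?thesis unfolding e1 using sigma_pos by (simp add: field_simps)
      qed
      finally show ?thesis .
    qed
    define Bad where "Bad = Chi n \<union> (\<Union>j<p n. TV n j \<union> TW n j)"
    have SB: "Bad \<in> sets (M n)" unfolding Bad_def using SC STV by auto
    have "measure (M n) Bad \<le> measure (M n) (Chi n) + measure (M n) (\<Union>j<p n. TV n j \<union> TW n j)"
      unfolding Bad_def by (rule measure_Un_le) (use SC STV in auto)
    also have "measure (M n) (\<Union>j<p n. TV n j \<union> TW n j) \<le> (\<Sum>j<p n. measure (M n) (TV n j \<union> TW n j))"
      by (rule measure_UNION_le) (use STV in auto)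
    also have "\<dots> \<le> (\<Sum>j<p n. 4 * real (p n) powr (-\<kappa>))"
    proof (rule sum_mono)
      fix j assume j: "j \<in> {..<p n}"
      have "measure (M n) (TV n j \<union> TW n j) \<le> measure (M n) (TV n j) + measure (M n) (TW n j)"
        by (rule measure_Un_le) (use STV j in auto)
      moreover have "j < p n" using j by simp
      ultimately show "measure (M n) (TV n j \<union> TW n j) \<le> 4 * real (p n) powr (-\<kappa>)"
        using PTV(1)[of j] PTV(2)[of j] by linarith
    qed
    also have "(\<Sum>j<p n. 4 * real (p n) powr (-\<kappa>)) = 4 * real (p n) powr (1 - \<kappa>)"
    proof -
      have "real (p n) * real (p n) powr (-\<kappa>) = real (p n) powr (1 - \<kappa>)"
        using p2 by (simp add: powr_diff powr_minus divide_inverse)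
      then show ?thesis by simp
    qed
    finally have mB: "measure (M n) Bad \<le> 2 / ((1 - \<rho>)\<^sup>2 * real n) + 4 * real (p n) powr (1 - \<kappa>)"
      using PC by linarith
    have "space (M n) - Bad \<subseteq> Concl n"
      using good[OF _ n p2] unfolding Bad_def by blast
    then have "measure (M n) (space (M n) - Bad) \<le> measure (M n) (Concl n)"
      by (rule MP.finite_measure_mono) (rule Sconcl)
    moreover have "measure (M n) (space (M n) - Bad) = 1 - measure (M n) Bad"
      using MP.prob_compl[OF SB] .
    ultimately show ?thesis using mB by linarith
  qed
  obtain C' where C': "C' > 0" and Rlim: "(\<lambda>n. measure (M n) {\<omega> \<in> space (M n).
          l1norm (p n) (\<lambda>j. betahat n \<omega> j - betaY n j)
            > C' * real (card {j. j < p n \<and> betaY n j \<noteq> 0}) * sqrt (ln (real (p n)) / real n)})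
          \<longlonglongrightarrow> 0"
    using rate by blast
  define Rset where "Rset n = {\<omega> \<in> space (M n).
          l1norm (p n) (\<lambda>j. betahat n \<omega> j - betaY n j)
            > C' * real (card {j. j < p n \<and> betaY n j \<noteq> 0}) * sqrt (ln (real (p n)) / real n)}" for n
  have SR: "Rset n \<in> sets (M n)" for n
  proof -
    note [measurable] = betahat_meas
    show ?thesis unfolding Rset_def l1norm_def by measurable
  qed
  have pbig: "eventually (\<lambda>n. p n = 0 \<or> real (p n) \<ge> P0) sequentially" if P0: "P0 > 1" for P0
  proof -
    define \<gamma> where "\<gamma> = 1 - measure N {x. \<bar>x\<bar> \<le> MM P0 C'}"
    have \<gamma>: "\<gamma> > 0" using std_normal_center_lt1[of "MM P0 C'"] unfolding \<gamma>_def N_def by simp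
    have ev1: "eventually (\<lambda>n. measure (M n) (Rset n) < \<gamma>/2) sequentially"
      by (rule order_tendstoD(2)[OF Rlim[folded Rset_def]]) (use \<gamma> in simp)
    have "(\<lambda>n. (2/9) / real n) \<longlonglongrightarrow> 0" by (rule lim_const_over_n)
    then have ev2: "eventually (\<lambda>n. (2/9) / real n < \<gamma>/2) sequentially"
      by (rule order_tendstoD(2)) (use \<gamma> in simp)
    have ev3: "eventually (\<lambda>n. n > 0) sequentially" by (rule eventually_gt_at_top)
    show ?thesis
    proof (rule eventually_mono[OF eventually_conj[OF ev1 eventually_conj[OF ev2 ev3]]])
      fix n assume h: "measure (M n) (Rset n) < \<gamma>/2 \<and> (2/9) / real n < \<gamma>/2 \<and> n > 0"
      then have n: "n > 0" by simp
      show "p n = 0 \<or> real (p n) \<ge> P0"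
      proof (rule ccontr)
        assume "\<not> (p n = 0 \<or> real (p n) \<ge> P0)"
        then have p1: "1 \<le> p n" and pP: "real (p n) < P0" by auto
        interpret MP: prob_space "M n" by (rule prob)
        have Bs: "{x::real. \<bar>x\<bar> \<le> MM P0 C'} \<in> sets borel" by measurable
        have p0: "0 < p n" using p1 by simp
        define G where "G = {\<omega>\<in>space (M n). (\<Sum>i<n. V n \<omega> 0 i * epsY n \<omega> i) / (sigmaY * sqrt n) \<in> {x. \<bar>x\<bar> \<le> MM P0 C'}}"
        define H where "H = {\<omega> \<in> space (M n). \<bar>(\<Sum>i<n. (epsY n \<omega> i)\<^sup>2) - real n * sigmaY\<^sup>2\<bar> \<ge> 3 * real n * sigmaY\<^sup>2}"
        have SG: "G \<in> sets (M n)" unfolding G_def by (rule PT(2)[OF n p0 Bs])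
        have PG: "measure (M n) G = 1 - \<gamma>" unfolding G_def \<gamma>_def using PT(1)[OF n p0 Bs] by simp
        have SH: "H \<in> sets (M n)" unfolding H_def by (rule Schi)
        have PH: "measure (M n) H \<le> (2/9) / real n"
        proof -
          have a: "3 * real n * sigmaY\<^sup>2 > 0" using n sigma_pos by simp
          have "measure (M n) H \<le> 2 * real n * sigmaY^4 / (3 * real n * sigmaY\<^sup>2)\<^sup>2"
            unfolding H_def by (rule Pchi[OF a])
          also have "\<dots> = (2/9) / real n"
          proof -
            have e1: "(3 * real n * sigmaY\<^sup>2)\<^sup>2 = 9 * (real n * (real n * sigmaY^4))"
              by (simp add: algebra_simps power2_eq_square power4_eq_xxxx)
            show ?thesis unfolding e1 using n sigma_pos by (simp add: field_simps)
          qed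
          finally show ?thesis .
        qed
        have sub: "space (M n) \<subseteq> Rset n \<union> G \<union> H"
        proof
          fix \<omega> assume \<omega>: "\<omega> \<in> space (M n)"
          show "\<omega> \<in> Rset n \<union> G \<union> H"
          proof (rule ccontr)
            assume nin: "\<omega> \<notin> Rset n \<union> G \<union> H"
            have R: "l1norm (p n) (\<lambda>j. betahat n \<omega> j - betaY n j)
              \<le> C' * real (card {j. j < p n \<and> betaY n j \<noteq> 0}) * sqrt (ln (real (p n)) / real n)"
              using nin \<omega> unfolding Rset_def by auto
            have HH: "(\<Sum>i<n. (epsY n \<omega> i)\<^sup>2) \<le> 4 * real n * sigmaY\<^sup>2"
              using nin \<omega> unfolding H_def by auto
            have "\<bar>\<Sum>i<n. V n \<omega> 0 i * epsY n \<omega> i\<bar> / (sigmaY * sqrt n) \<le> MM P0 C'"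
              by (rule anti_det[OF \<omega> n p1 pP C' R HH])
            then have "\<omega> \<in> G" unfolding G_def using \<omega> sigma_pos n by (simp add: abs_divide)
            then show False using nin by simp
          qed
        qed
        have "1 = measure (M n) (space (M n))" by (simp add: MP.prob_space)
        also have "\<dots> \<le> measure (M n) (Rset n \<union> G \<union> H)"
          by (rule MP.finite_measure_mono[OF sub]) (use SR SG SH in auto)
        also have "\<dots> \<le> measure (M n) (Rset n \<union> G) + measure (M n) H"
          by (rule measure_Un_le) (use SR SG SH in auto)
        also have "measure (M n) (Rset n \<union> G) \<le> measure (M n) (Rset n) + measure (M n) G"
          by (rule measure_Un_le) (use SR SG in auto)
        finally have "1 \<le> measure (M n) (Rset n) + (1 - \<gamma>) + (2/9) / real n" using PG PH by linarith
        then show False using h by linarith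
      qed
    qed
  qed
  have lim: "(\<lambda>n. measure (M n) (Concl n)) \<longlonglongrightarrow> 1"
  proof (rule tendstoI)
    fix e :: real assume e: "e > 0"
    have "((\<lambda>x::real. x powr (1 - \<kappa>)) \<longlongrightarrow> 0) at_top"
      by (rule tendsto_neg_powr) (use \<kappa>1 in \<open>auto intro: filterlim_ident\<close>)
    then have "eventually (\<lambda>x::real. x powr (1 - \<kappa>) < e / 8) at_top"
      by (rule order_tendstoD(2)) (use e in simp)
    then obtain N0 where N0: "\<And>x. x \<ge> N0 \<Longrightarrow> x powr (1 - \<kappa>) < e / 8"
      unfolding eventually_at_top_linorder by blast
    define P0 where "P0 = max N0 2"
    have P0: "P0 > 1" "P0 \<ge> 2" "P0 \<ge> N0" unfolding P0_def by auto
    have "(\<lambda>n. (2 / (1 - \<rho>)\<^sup>2) / real n) \<longlonglongrightarrow> 0" by (rule lim_const_over_n)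
    then have ev2: "eventually (\<lambda>n. (2 / (1 - \<rho>)\<^sup>2) / real n < e / 2) sequentially"
      by (rule order_tendstoD(2)) (use e in simp)
    have ev3: "eventually (\<lambda>n. n > 0) sequentially" by (rule eventually_gt_at_top)
    show "eventually (\<lambda>n. dist (measure (M n) (Concl n)) 1 < e) sequentially"
    proof (rule eventually_mono[OF eventually_conj[OF pbig[OF P0(1)] eventually_conj[OF ev2 ev3]]])
      fix n assume h: "(p n = 0 \<or> real (p n) \<ge> P0) \<and> (2 / (1 - \<rho>)\<^sup>2) / real n < e / 2 \<and> n > 0"
      interpret MP: prob_space "M n" by (rule prob)
      have le1: "measure (M n) (Concl n) \<le> 1" by (rule MP.prob_le_1)
      show "dist (measure (M n) (Concl n)) 1 < e"
      proof (cases "p n = 0")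
        case True
        then have "Concl n = space (M n)" unfolding Concl_def l1norm_def by auto
        then show ?thesis using e by (simp add: MP.prob_space)
      next
        case False
        then have pP: "real (p n) \<ge> P0" using h by simp
        then have p2: "p n \<ge> 2" using P0 by linarith
        have n: "n > 0" using h by simp
        have "real (p n) powr (1 - \<kappa>) < e / 8" using N0 pP P0 by simp
        moreover have "2 / ((1 - \<rho>)\<^sup>2 * real n) < e / 2" using h by simp
        ultimately have "measure (M n) (Concl n) > 1 - e"
          using Pbound[OF n p2] by linarith
        then show ?thesis using le1 by (simp add: dist_real_def)
      qed
    qed
  qed
  show ?thesis
    using CC0 lim unfolding Concl_def by blast
qed
end
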